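(* Let $\mathcal{A}$ be a (finite) activation algebra and $M$ a finite set of morphisms of $\mathcal{T}_\mathcal{A}$. If $\tau\in M^\omega$ describes a path which satisfies the trace condition of $\mathcal{T}_\mathcal{A}$, then the greedy run of $\tau$ exists and is accepting.
   Context: An activation algebra $\mathcal{A}=(A,\le,\vee,0,\alpha)$ is a finite join-semilattice $(A,\le,\vee)$ with least element $0$, together with a distinguished element $\alpha\in A$ with $\alpha\neq 0$. The category $\mathcal{T}_\mathcal{A}$ has the finite sets as objects; a morphism $R\colon X\to Y$ is a relation $R\subseteq X\times A\times Y$; the composite of $R\colon X\to Y$ and $R'\colon Y\to Z$ is $R'\circ R=\{(x,c,z)\mid \exists y\in Y,\ a,b\in A:\ (x,a,y)\in R,\ (y,b,z)\in R',\ a\vee b=c\}$, and the identity is $1_X=\{(x,0,x)\mid x\in X\}$. A sequence $\tau\in M^\omega$ of morphisms describes a path if $\mathrm{cod}(\tau_i)=\mathrm{dom}(\tau_{i+1})$ for all $i$; write $P(n<m)=\tau_{m-1}\circ\cdots\circ\tau_n$ for $n<m$. Such a path satisfies the trace condition if there exist a strictly increasing sequence $k_0<k_1<\cdots$ of natural numbers and elements $s_i\in\mathrm{dom}(\tau_{k_i})$ with $(s_i,\alpha,s_{i+1})\in P(k_i<k_{i+1})$ for all $i$. Safra boards. Fix a countable set $\mathcal{C}\supseteq\omega$ of chips. A Safra board on $\mathcal{A}$ and a finite set $X$ is a pair $(\Theta,\sigma)$ where the control $\Theta\subseteq\mathcal{C}$ is a finite set with a linear order $\le$, and $\sigma\colon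 X\times A\to\mathcal{P}(\mathcal{P}(\Theta))$, such that every $\gamma\in\Theta$ belongs to some $S\in\sigma(x,a)$. The elements $S\in\sigma(x,a)$ are called stacks (bottom = $\le$-least, top = $\le$-greatest element). A chip $\gamma\in\Theta$ is covered if it is not the top element of any stack $S\in\sigma(x,a)$, for any $x,a$. Stacks are linearly ordered by $S<_\Theta S'$ iff $S$ contains the $\le$-least element of the symmetric difference $(S\setminus S')\cup(S'\setminus S)$. Transitions between boards: (i) $\tau$-successor, for $\tau\colon X\to Y$, written $(\Theta,\sigma)\xrightarrow{\tau}(\Theta',\sigma')$: first let $\sigma^*(y,a)=\{S\mid S\in\sigma(x,b)\text{ for some }x\in X,b\in A, c\in A \text{ with }(x,c,y)\in\tau\text{ and }a=b\vee c\}$ and let $\Theta^*$ be the set of chips occurring in some stack of $\sigma^*$, with the order inherited from $\Theta$. Then choose a finite linearly ordered $\Theta^\circ\subseteq\mathcal{C}\setminus\Theta$ and a bijection $\iota$ from $\{y\in Y\mid\sigma^*(y,\alpha)\neq\emptyset\}$ onto $\Theta^\circ$, and set $\sigma'(y,\alpha)=\emptyset$, $\sigma'(y,0)=\sigma^*(y,0)\cup\{S\cup\{\iota(y)\}\mid S\in\sigma^*(y,\alpha)\}$, $\sigma'(y,a)=\sigma^*(y,a)$ for $a\notin\{0,\alpha\}$, and $\Theta'=\Theta^*\oplus\Theta^\circ$ (concatenation: all elements of $\Theta^*$ below all elements of $\Theta^\circ$). (ii) Weakening $(\Theta,\sigma)\xrightarrow{W}(\Theta',\sigma')$: a board on the same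 set with $\sigma'(x,a)\subseteq\sigma(x,a)$ for all $x,a$ and $\Theta'\subseteq\Theta$ (induced order) the set of chips still occurring in stacks of $\sigma'$. (iii) Thinning $(\Theta,\sigma)\xrightarrow{T}(\Theta',\sigma')$: the weakening with $\sigma'(x,a)=\{\min_{<_\Theta}\sigma(x,a)\}$ if $\sigma(x,a)\neq\emptyset$ and $\sigma'(x,a)=\emptyset$ otherwise. (iv) $\gamma$-reset for a covered $\gamma\in\Theta$, $(\Theta,\sigma)\xrightarrow{R_\gamma}(\Theta',\sigma')$: for a stack $S$ let $S{\upharpoonright}\gamma=\{z\in S\mid z\le\gamma\}$ if $\gamma\in S$ and $S{\upharpoonright}\gamma=S$ otherwise; $\sigma'(x,a)=\{S{\upharpoonright}\gamma\mid S\in\sigma(x,a)\}$, and $\Theta'$ is the set of chips occurring in stacks of $\sigma'$. (v) Population $(\Theta,\sigma)\xrightarrow{P}(\Theta,\sigma')$: $\sigma(x,0)\subseteq\sigma'(x,0)\subseteq\sigma(x,0)\cup\{\emptyset\}$ for all $x$ and $\sigma'(x,a)=\sigma(x,a)$ for $a\neq 0$. A run of $\tau\in M^\omega$ is a sequence $(\Theta_i,\sigma_i)_{i\in\omega}$ of boards together with a strictly monotone $\iota\colon\omega\to\omega$ such that for $i=\iota(n)$ one has $(\Theta_i,\sigma_i)\xrightarrow{\tau_n}(\Theta_{i+1},\sigma_{i+1})$, and for $i$ not in the image of $\iota$ the step $(\Theta_i,\sigma_i)\to(\Theta_{i+1},\sigma_{i+1})$ is a weakening, a population, or a $\gamma$-reset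 for some $\gamma\in\Theta_i$. A run is accepting if there are $N\in\omega$ and $\gamma\in\bigcap_{n\ge N}\Theta_n$ such that the step from index $i$ to $i+1$ is a $\gamma$-reset for infinitely many $i$. A greedy $\tau$-transition from $(\Theta,\sigma)$ is the following sequence of transitions: let $\gamma_1<\dots<\gamma_k$ be all chips covered in $(\Theta,\sigma)$; perform the resets $R_{\gamma_k},R_{\gamma_{k-1}},\dots,R_{\gamma_1}$ in this order; then perform the population that replaces every $\sigma(x,0)=\emptyset$ by $\{\emptyset\}$ and changes nothing else; then a $\tau$-successor step; then the thinning. A greedy run of $\tau\in M^\omega$ is the run starting with the board $(\emptyset,\ (x,a)\mapsto\emptyset)$ on $\mathrm{dom}(\tau_0)$ and consisting of consecutive greedy $\tau_0$-, $\tau_1$-, $\tau_2$-, $\dots$ transitions. *)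

theory Defs
  imports Main
begin

(* Activation algebra: the type 'a :: {finite, bounded_semilattice_sup_bot}
   (finite join-semilattice, join = sup, least element 0 = bot) together with
   a distinguished element alpha \<noteq> bot, passed as a parameter.
   Objects of T_A: finite sets of elements of a type 'x. *)

type_synonym ('x,'a) mor = "'x set \<times> ('x \<times> 'a \<times> 'x) set \<times> 'x set"

definition mdom :: "('x,'a) mor \<Rightarrow> 'x set" where "mdom R = fst R"
definition mrel :: "('x,'a) mor \<Rightarrow> ('x \<times> 'a \<times> 'x) set" where "mrel R = fst (snd R)"
definition mcod :: "('x,'a) mor \<Rightarrow> 'x set" where "mcod R = snd (snd R)"

definition is_morphism :: "('x,'a) mor \<Rightarrow> bool" where
  "is_morphism R \<longleftrightarrow> finite (mdom R) \<and> finite (mcod R) \<and>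
     mrel R \<subseteq> mdom R \<times> UNIV \<times> mcod R"

(* composite R' o R of relations (R first, then R') *)
definition rcomp :: "('x \<times> 'a::semilattice_sup \<times> 'x) set \<Rightarrow> ('x \<times> 'a \<times> 'x) set \<Rightarrow> ('x \<times> 'a \<times> 'x) set" where
  "rcomp R R' = {(x,c,z). \<exists>y a b. (x,a,y) \<in> R \<and> (y,b,z) \<in> R' \<and> sup a b = c}"

(* seg tau n k = relation of tau_(n+k) o ... o tau_n  (k+1 morphisms) *)
fun seg :: "(nat \<Rightarrow> ('x,'a::semilattice_sup) mor) \<Rightarrow> nat \<Rightarrow> nat \<Rightarrow> ('x \<times> 'a \<times> 'x) set" where
  "seg \<tau> n 0 = mrel (\<tau> n)"
| "seg \<tau> n (Suc k) = rcomp (seg \<tau> n k) (mrel (\<tau> (n + Suc k)))"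

(* P(n<m) = tau_(m-1) o ... o tau_n, meaningful for n < m *)
definition Ppath :: "(nat \<Rightarrow> ('x,'a::semilattice_sup) mor) \<Rightarrow> nat \<Rightarrow> nat \<Rightarrow> ('x \<times> 'a \<times> 'x) set" where
  "Ppath \<tau> n m = seg \<tau> n (m - n - 1)"

definition describes_path :: "(nat \<Rightarrow> ('x,'a) mor) \<Rightarrow> bool" where
  "describes_path \<tau> \<longleftrightarrow> (\<forall>i. mcod (\<tau> i) = mdom (\<tau> (Suc i)))"

definition trace_condition :: "'a::semilattice_sup \<Rightarrow> (nat \<Rightarrow> ('x,'a) mor) \<Rightarrow> bool" where
  "trace_condition \<alpha> \<tau> \<longleftrightarrow> (\<exists>k s. strict_mono k \<and> (\<forall>i. s i \<in> mdom (\<tau> (k i))) \<and>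
      (\<forall>i. (s i, \<alpha>, s (Suc i)) \<in> Ppath \<tau> (k i) (k (Suc i))))"

(* Safra boards. Chips are natural numbers (C = nat). The control Theta with its
   linear order is a duplicate-free list (bottom first). The board also records
   the finite set X it lives on. *)
record ('x,'a) board =
  bset :: "'x set"
  ctrl :: "nat list"
  stk :: "'x \<Rightarrow> 'a \<Rightarrow> nat set set"

definition chip_le :: "nat list \<Rightarrow> nat \<Rightarrow> nat \<Rightarrow> bool" where
  "chip_le L u v \<longleftrightarrow> (\<exists>i j. i \<le> j \<and> j < length L \<and> L ! i = u \<and> L ! j = v)"

definition is_board :: "('x,'a) board \<Rightarrow> bool" where
  "is_board B \<longleftrightarrow> finite (bset B) \<and> distinct (ctrl B) \<and>
     (\<forall>x a. stk B x a \<subseteq> Pow (set (ctrl B))) \<and>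
     (\<forall>x a. x \<notin> bset B \<longrightarrow> stk B x a = {}) \<and>
     (\<forall>\<gamma>\<in>set (ctrl B). \<exists>x\<in>bset B. \<exists>a. \<exists>S\<in>stk B x a. \<gamma> \<in> S)"

definition occ :: "nat list \<Rightarrow> ('x \<Rightarrow> 'a \<Rightarrow> nat set set) \<Rightarrow> nat list" where
  "occ L \<sigma> = filter (\<lambda>\<gamma>. \<exists>x a S. S \<in> \<sigma> x a \<and> \<gamma> \<in> S) L"

definition is_top :: "nat list \<Rightarrow> nat set \<Rightarrow> nat \<Rightarrow> bool" where
  "is_top L S \<gamma> \<longleftrightarrow> \<gamma> \<in> S \<and> (\<forall>z\<in>S. chip_le L z \<gamma>)"

definition covered :: "nat \<Rightarrow> ('x,'a) board \<Rightarrow> bool" where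
  "covered \<gamma> B \<longleftrightarrow> \<gamma> \<in> set (ctrl B) \<and> \<not> (\<exists>x a S. S \<in> stk B x a \<and> is_top (ctrl B) S \<gamma>)"

definition stack_less :: "nat list \<Rightarrow> nat set \<Rightarrow> nat set \<Rightarrow> bool" where
  "stack_less L S S' \<longleftrightarrow> (\<exists>\<gamma>. \<gamma> \<in> S - S' \<and> (\<forall>z \<in> (S - S') \<union> (S' - S). chip_le L \<gamma> z))"

definition stack_min :: "nat list \<Rightarrow> nat set set \<Rightarrow> nat set" where
  "stack_min L F = (THE S. S \<in> F \<and> (\<forall>S'\<in>F. S' \<noteq> S \<longrightarrow> stack_less L S S'))"

definition succ_step :: "'a::bounded_semilattice_sup_bot \<Rightarrow> ('x,'a) mor \<Rightarrow> ('x,'a) board \<Rightarrow> ('x,'a) board \<Rightarrow> bool" where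
  "succ_step \<alpha> \<tau> B B' \<longleftrightarrow> bset B = mdom \<tau> \<and>
     (let \<sigma>s = (\<lambda>y a. {S. \<exists>x b c. (x,c,y) \<in> mrel \<tau> \<and> S \<in> stk B x b \<and> a = sup b c});
          Ls = occ (ctrl B) \<sigma>s
      in \<exists>Lo \<iota>. distinct Lo \<and> set Lo \<inter> set (ctrl B) = {} \<and>
           bij_betw \<iota> {y \<in> mcod \<tau>. \<sigma>s y \<alpha> \<noteq> {}} (set Lo) \<and>
           B' = \<lparr> bset = mcod \<tau>, ctrl = Ls @ Lo,
                  stk = (\<lambda>y a. if a = \<alpha> then {}
                               else if a = bot then \<sigma>s y bot \<union> {insert (\<iota> y) S | S. S \<in> \<sigma>s y \<alpha>}
                               else \<sigma>s y a) \<rparr>)"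

definition weak_step :: "('x,'a) board \<Rightarrow> ('x,'a) board \<Rightarrow> bool" where
  "weak_step B B' \<longleftrightarrow> bset B' = bset B \<and> (\<forall>x a. stk B' x a \<subseteq> stk B x a) \<and>
     ctrl B' = occ (ctrl B) (stk B')"

definition thin_fun :: "('x,'a) board \<Rightarrow> ('x,'a) board" where
  "thin_fun B = (let \<sigma>' = (\<lambda>x a. if stk B x a = {} then {} else {stack_min (ctrl B) (stk B x a)})
                 in \<lparr> bset = bset B, ctrl = occ (ctrl B) \<sigma>', stk = \<sigma>' \<rparr>)"

definition restr :: "nat list \<Rightarrow> nat \<Rightarrow> nat set \<Rightarrow> nat set" where
  "restr L \<gamma> S = (if \<gamma> \<in> S then {z \<in> S. chip_le L z \<gamma>} else S)"

definition reset_fun :: "nat \<Rightarrow> ('x,'a) board \<Rightarrow> ('x,'a) board" where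
  "reset_fun \<gamma> B = (let \<sigma>' = (\<lambda>x a. restr (ctrl B) \<gamma> ` stk B x a)
                    in \<lparr> bset = bset B, ctrl = occ (ctrl B) \<sigma>', stk = \<sigma>' \<rparr>)"

definition reset_step :: "nat \<Rightarrow> ('x,'a) board \<Rightarrow> ('x,'a) board \<Rightarrow> bool" where
  "reset_step \<gamma> B B' \<longleftrightarrow> covered \<gamma> B \<and> B' = reset_fun \<gamma> B"

definition pop_step :: "('x,'a::bot) board \<Rightarrow> ('x,'a) board \<Rightarrow> bool" where
  "pop_step B B' \<longleftrightarrow> bset B' = bset B \<and> ctrl B' = ctrl B \<and>
     (\<forall>x. stk B x bot \<subseteq> stk B' x bot \<and> stk B' x bot \<subseteq> stk B x bot \<union> {{}}) \<and>
     (\<forall>x a. a \<noteq> bot \<longrightarrow> stk B' x a = stk B x a)"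

definition pop_fun :: "('x,'a::bot) board \<Rightarrow> ('x,'a) board" where
  "pop_fun B = B\<lparr> stk := (\<lambda>x a. if a = bot \<and> x \<in> bset B \<and> stk B x bot = {} then {{}} else stk B x a) \<rparr>"

definition is_run :: "'a::bounded_semilattice_sup_bot \<Rightarrow> (nat \<Rightarrow> ('x,'a) mor) \<Rightarrow> (nat \<Rightarrow> ('x,'a) board) \<Rightarrow> (nat \<Rightarrow> nat) \<Rightarrow> bool" where
  "is_run \<alpha> \<tau> b \<iota> \<longleftrightarrow> strict_mono \<iota> \<and> (\<forall>i. is_board (b i)) \<and>
     (\<forall>n. succ_step \<alpha> (\<tau> n) (b (\<iota> n)) (b (Suc (\<iota> n)))) \<and>
     (\<forall>i. i \<notin> range \<iota> \<longrightarrow> weak_step (b i) (b (Suc i)) \<or> pop_step (b i) (b (Suc i)) \<or>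
           (\<exists>\<gamma>\<in>set (ctrl (b i)). reset_step \<gamma> (b i) (b (Suc i))))"

definition accepting :: "(nat \<Rightarrow> ('x,'a) board) \<Rightarrow> bool" where
  "accepting b \<longleftrightarrow> (\<exists>N \<gamma>. (\<forall>n\<ge>N. \<gamma> \<in> set (ctrl (b n))) \<and>
      infinite {i. reset_step \<gamma> (b i) (b (Suc i))})"

(* Bs = boards visited by a greedy tau-transition starting from B:
   B = B_0 -R-> B_1 ... -R-> B_k -P-> B_(k+1) -tau-> B_(k+2) -T-> B_(k+3) *)
definition greedy_trans :: "'a::bounded_semilattice_sup_bot \<Rightarrow> ('x,'a) mor \<Rightarrow> ('x,'a) board \<Rightarrow> ('x,'a) board list \<Rightarrow> bool" where
  "greedy_trans \<alpha> \<tau> B Bs \<longleftrightarrow>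
     (let cs = rev (filter (\<lambda>\<gamma>. covered \<gamma> B) (ctrl B)); k = length cs in
      length Bs = k + 4 \<and> Bs ! 0 = B \<and>
      (\<forall>j<k. Bs ! Suc j = reset_fun (cs ! j) (Bs ! j)) \<and>
      Bs ! (k + 1) = pop_fun (Bs ! k) \<and>
      succ_step \<alpha> \<tau> (Bs ! (k + 1)) (Bs ! (k + 2)) \<and>
      Bs ! (k + 3) = thin_fun (Bs ! (k + 2)))"

definition empty_board :: "'x set \<Rightarrow> ('x,'a) board" where
  "empty_board X = \<lparr> bset = X, ctrl = [], stk = (\<lambda>x a. {}) \<rparr>"

definition greedy_run :: "'a::bounded_semilattice_sup_bot \<Rightarrow> (nat \<Rightarrow> ('x,'a) mor) \<Rightarrow> (nat \<Rightarrow> ('x,'a) board) \<Rightarrow> (nat \<Rightarrow> nat) \<Rightarrow> bool" where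
  "greedy_run \<alpha> \<tau> b \<iota> \<longleftrightarrow> is_run \<alpha> \<tau> b \<iota> \<and> b 0 = empty_board (mdom (\<tau> 0)) \<and>
     (\<exists>p. p 0 = 0 \<and> (\<forall>n. greedy_trans \<alpha> (\<tau> n) (b (p n)) (map b [p n ..< Suc (p (Suc n))]) \<and>
                          \<iota> n = p (Suc n) - 2))"

end

theory Submission
  imports Defs
begin


definition pos :: "nat list \<Rightarrow> nat \<Rightarrow> nat" where
  "pos L u = (THE i. i < length L \<and> L ! i = u)"

lemma pos_nth: "distinct L \<Longrightarrow> i < length L \<Longrightarrow> pos L (L ! i) = i"
  unfolding pos_def by (rule the_equality) (auto simp: nth_eq_iff_index_eq)

lemma pos_prop: "distinct L \<Longrightarrow> u \<in> set L \<Longrightarrow> pos L u < length L \<and> L ! pos L u = u"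
  by (metis in_set_conv_nth pos_nth)

lemma pos_inj: "distinct L \<Longrightarrow> u \<in> set L \<Longrightarrow> v \<in> set L \<Longrightarrow> pos L u = pos L v \<Longrightarrow> u = v"
  by (metis pos_prop)

lemma chip_le_pos: "distinct L \<Longrightarrow> chip_le L u v \<longleftrightarrow> u \<in> set L \<and> v \<in> set L \<and> pos L u \<le> pos L v"
  unfolding chip_le_def
  by (metis (no_types, lifting) le_less_trans nth_mem pos_nth pos_prop)

lemma pos_Cons: "distinct (x#L) \<Longrightarrow> u \<in> set (x#L) \<Longrightarrow> pos (x#L) u = (if u = x then 0 else Suc (pos L u))"
proof -
  assume d: "distinct (x#L)" and u: "u \<in> set (x#L)"
  show ?thesis
  proof (cases "u = x")
    case True then show ?thesis using pos_nth[OF d, of 0] by simp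
  next
    case False
    then have "u \<in> set L" using u by simp
    then have "pos L u < length L \<and> L ! pos L u = u" using pos_prop d by simp
    then have "pos (x#L) ((x#L) ! Suc (pos L u)) = Suc (pos L u)"
      using pos_nth[OF d, of "Suc (pos L u)"] by simp
    then show ?thesis using False \<open>pos L u < length L \<and> L ! pos L u = u\<close> by simp
  qed
qed

lemma pos_filter_le: "distinct L \<Longrightarrow> u \<in> set (filter P L) \<Longrightarrow> pos (filter P L) u \<le> pos L u"
proof (induction L)
  case Nil then show ?case by simp
next
  case (Cons x L)
  show ?case
  proof (cases "u = x")
    case True
    then have "P x" using Cons.prems by (auto split: if_splits)
    then show ?thesis using True Cons.prems by (simp add: pos_Cons)
  next
    case False
    then have u: "u \<in> set (filter P L)" using Cons.prems by (auto split: if_splits)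
    have "pos (filter P (x#L)) u \<le> Suc (pos (filter P L) u)"
      using False u Cons.prems by (auto simp: pos_Cons)
    also have "\<dots> \<le> Suc (pos L u)" using Cons.IH u Cons.prems by simp
    also have "\<dots> = pos (x#L) u" using False u Cons.prems by (simp add: pos_Cons)
    finally show ?thesis .
  qed
qed

lemma pos_filter_mono: "distinct L \<Longrightarrow> u \<in> set (filter P L) \<Longrightarrow> v \<in> set (filter P L) \<Longrightarrow>
   pos (filter P L) u \<le> pos (filter P L) v \<longleftrightarrow> pos L u \<le> pos L v"
proof (induction L)
  case Nil then show ?case by simp
next
  case (Cons x L)
  have d: "distinct (filter P (x#L))" using Cons.prems by simp
  have uu: "u \<in> set (x#L)" "v \<in> set (x#L)" using Cons.prems by (auto split: if_splits)
  show ?case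
  proof (cases "u = x"; cases "v = x")
    assume "u = x" "v = x" then show ?thesis by simp
  next
    assume a: "u = x" "v \<noteq> x"
    then have "P x" using Cons.prems by (auto split: if_splits)
    then show ?thesis using a Cons.prems by (auto simp: pos_Cons)
  next
    assume a: "u \<noteq> x" "v = x"
    then have "P x" using Cons.prems by (auto split: if_splits)
    then show ?thesis using a Cons.prems by (auto simp: pos_Cons)
  next
    assume a: "u \<noteq> x" "v \<noteq> x"
    then have u: "u \<in> set (filter P L)" "v \<in> set (filter P L)" using Cons.prems by (auto split: if_splits)
    have "pos (filter P (x#L)) u \<le> pos (filter P (x#L)) v \<longleftrightarrow> pos (filter P L) u \<le> pos (filter P L) v"
      using a u Cons.prems by (auto simp: pos_Cons)
    also have "\<dots> \<longleftrightarrow> pos L u \<le> pos L v" using Cons.IH u Cons.prems by simp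
    also have "\<dots> \<longleftrightarrow> pos (x#L) u \<le> pos (x#L) v" using a uu Cons.prems by (simp add: pos_Cons)
    finally show ?thesis .
  qed
qed

lemma pos_append1: "distinct (A @ B) \<Longrightarrow> u \<in> set A \<Longrightarrow> pos (A @ B) u = pos A u"
  by (metis distinct_append length_append nth_append pos_nth pos_prop trans_less_add1)

lemma pos_append2: "distinct (A @ B) \<Longrightarrow> u \<in> set B \<Longrightarrow> pos (A @ B) u = length A + pos B u"
  by (metis distinct_append nth_append_length_plus pos_nth pos_prop length_append add_less_cancel_left)

lemma chip_le_filter: "distinct L \<Longrightarrow> chip_le (filter P L) u v \<longleftrightarrow> chip_le L u v \<and> P u \<and> P v"
  using pos_filter_mono[of L u P v] by (auto simp: chip_le_pos)




lemma ex_min_pos: "finite D \<Longrightarrow> D \<noteq> {} \<Longrightarrow> \<exists>g\<in>D. \<forall>z\<in>D. (f::nat\<Rightarrow>nat) g \<le> f z"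
proof -
  assume "finite D" "D \<noteq> {}"
  then have "Min (f ` D) \<in> f ` D" by simp
  then obtain g where "g \<in> D" "f g = Min (f ` D)" by auto
  then show ?thesis using \<open>finite D\<close> by (metis Min_le finite_imageI imageI)
qed

lemma stack_less_pos: "distinct L \<Longrightarrow> S \<subseteq> set L \<Longrightarrow> S' \<subseteq> set L \<Longrightarrow>
  stack_less L S S' \<longleftrightarrow> (\<exists>g\<in>S-S'. \<forall>z\<in>(S-S')\<union>(S'-S). pos L g \<le> pos L z)"
proof -
  assume d: "distinct L" and s: "S \<subseteq> set L" "S' \<subseteq> set L"
  show ?thesis unfolding stack_less_def chip_le_pos[OF d]
  proof
    assume "\<exists>g. g \<in> S - S' \<and> (\<forall>z\<in>S - S' \<union> (S' - S). g \<in> set L \<and> z \<in> set L \<and> pos L g \<le> pos L z)"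
    then show "\<exists>g\<in>S-S'. \<forall>z\<in>(S-S')\<union>(S'-S). pos L g \<le> pos L z" by blast
  next
    assume "\<exists>g\<in>S-S'. \<forall>z\<in>(S-S')\<union>(S'-S). pos L g \<le> pos L z"
    then obtain g where "g\<in>S-S'" "\<forall>z\<in>(S-S')\<union>(S'-S). pos L g \<le> pos L z" by blast
    moreover have "\<forall>z\<in>(S-S')\<union>(S'-S). z \<in> set L" using s by blast
    ultimately show "\<exists>g. g \<in> S - S' \<and> (\<forall>z\<in>S - S' \<union> (S' - S). g \<in> set L \<and> z \<in> set L \<and> pos L g \<le> pos L z)"
      using s by blast
  qed
qed

lemma stack_less_asym: "distinct L \<Longrightarrow> S \<subseteq> set L \<Longrightarrow> S' \<subseteq> set L \<Longrightarrow>
  stack_less L S S' \<Longrightarrow> \<not> stack_less L S' S"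
proof
  assume d: "distinct L" and s: "S \<subseteq> set L" "S' \<subseteq> set L" and
    a: "stack_less L S S'" "stack_less L S' S"
  from a(1) obtain g where g: "g\<in>S-S'" "\<forall>z\<in>(S-S')\<union>(S'-S). pos L g \<le> pos L z"
    using stack_less_pos[OF d s] by auto
  from a(2) obtain h where h: "h\<in>S'-S" "\<forall>z\<in>(S'-S)\<union>(S-S'). pos L h \<le> pos L z"
    using stack_less_pos[OF d s(2) s(1)] by auto
  have "pos L h \<le> pos L g" using h(2) g(1) by blast
  moreover have "pos L g \<le> pos L h" using g(2) h(1) by blast
  ultimately have "pos L g = pos L h" by simp
  then have "g = h" using pos_inj[OF d] g h s by blast
  then show False using g h by auto
qed

lemma stack_less_total: "distinct L \<Longrightarrow> S \<subseteq> set L \<Longrightarrow> S' \<subseteq> set L \<Longrightarrow> S \<noteq> S' \<Longrightarrow>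
  stack_less L S S' \<or> stack_less L S' S"
proof -
  assume d: "distinct L" and s: "S \<subseteq> set L" "S' \<subseteq> set L" and ne: "S \<noteq> S'"
  let ?D = "(S-S')\<union>(S'-S)"
  have "finite ?D" using s finite_subset by blast
  moreover have "?D \<noteq> {}" using ne by auto
  ultimately have "\<exists>g\<in>?D. \<forall>z\<in>?D. pos L g \<le> pos L z" by (rule ex_min_pos)
  then obtain g where g: "g \<in> ?D" "\<forall>z\<in>?D. pos L g \<le> pos L z" by blast
  show ?thesis
  proof (cases "g \<in> S")
    case True
    then show ?thesis using g stack_less_pos[OF d s] by blast
  next
    case False
    then have "g \<in> S' - S" using g by auto
    then show ?thesis using g stack_less_pos[OF d s(2) s(1)] by (metis Un_commute)
  qed
qed

lemma stack_less_trans: "distinct L \<Longrightarrow> S \<subseteq> set L \<Longrightarrow> S' \<subseteq> set L \<Longrightarrow> S'' \<subseteq> set L \<Longrightarrow>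
  stack_less L S S' \<Longrightarrow> stack_less L S' S'' \<Longrightarrow> stack_less L S S''"
proof -
  assume d: "distinct L" and s: "S \<subseteq> set L" "S' \<subseteq> set L" "S'' \<subseteq> set L" and
    a: "stack_less L S S'" "stack_less L S' S''"
  from a(1) obtain g where g: "g\<in>S-S'" "\<forall>z\<in>(S-S')\<union>(S'-S). pos L g \<le> pos L z"
    using stack_less_pos[OF d s(1,2)] by auto
  from a(2) obtain h where h: "h\<in>S'-S''" "\<forall>z\<in>(S'-S'')\<union>(S''-S'). pos L h \<le> pos L z"
    using stack_less_pos[OF d s(2,3)] by auto
  have "g \<noteq> h" using g h by auto
  then have ne: "pos L g \<noteq> pos L h" using pos_inj[OF d] g h s by blast
  show ?thesis
  proof (cases "pos L g < pos L h")
    case True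
    have "g \<notin> S''"
    proof
      assume "g \<in> S''"
      then have "g \<in> (S'-S'')\<union>(S''-S')" using g by blast
      then show False using h(2) True by force
    qed
    moreover have "\<forall>z\<in>(S-S'')\<union>(S''-S). pos L g \<le> pos L z"
    proof
      fix z assume z: "z \<in> (S-S'')\<union>(S''-S)"
      show "pos L g \<le> pos L z"
      proof (rule ccontr)
        assume "\<not> pos L g \<le> pos L z"
        then have "z \<notin> (S-S')\<union>(S'-S)" using g(2) by blast
        moreover have "z \<notin> (S'-S'')\<union>(S''-S')" using h(2) True \<open>\<not> pos L g \<le> pos L z\<close> by force
        ultimately show False using z by blast
      qed
    qed
    ultimately show ?thesis using g stack_less_pos[OF d s(1,3)] by blast
  next
    case False
    then have lt: "pos L h < pos L g" using ne by simp
    have "h \<in> S"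
    proof (rule ccontr)
      assume "h \<notin> S"
      then have "h \<in> (S-S')\<union>(S'-S)" using h by blast
      then show False using g(2) lt by force
    qed
    moreover have "\<forall>z\<in>(S-S'')\<union>(S''-S). pos L h \<le> pos L z"
    proof
      fix z assume z: "z \<in> (S-S'')\<union>(S''-S)"
      show "pos L h \<le> pos L z"
      proof (rule ccontr)
        assume "\<not> pos L h \<le> pos L z"
        then have "z \<notin> (S'-S'')\<union>(S''-S')" using h(2) by blast
        moreover have "z \<notin> (S-S')\<union>(S'-S)" using g(2) lt \<open>\<not> pos L h \<le> pos L z\<close> by force
        ultimately show False using z by blast
      qed
    qed
    ultimately show ?thesis using h stack_less_pos[OF d s(1,3)] by blast
  qed
qed

lemma stack_min_ex: assumes dd: "distinct L" shows "finite F \<Longrightarrow> F \<noteq> {} \<Longrightarrow> \<forall>S\<in>F. S \<subseteq> set L \<Longrightarrow>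
  \<exists>S\<in>F. \<forall>S'\<in>F. S' \<noteq> S \<longrightarrow> stack_less L S S'"
proof (induction F rule: finite_ne_induct)
  case (singleton x) then show ?case by simp
next
  case (insert x F)
  then obtain m where m: "m \<in> F" "\<forall>S'\<in>F. S' \<noteq> m \<longrightarrow> stack_less L m S'" by auto
  show ?case
  proof (cases "x = m")
    case True then show ?thesis using m by auto
  next
    case False
    then have "stack_less L x m \<or> stack_less L m x" using stack_less_total dd insert m by auto
    then show ?thesis
    proof
      assume "stack_less L x m"
      then have "\<forall>S'\<in>insert x F. S' \<noteq> x \<longrightarrow> stack_less L x S'"
        using m stack_less_trans[of L x m] insert dd by (metis insert_iff)
      then show ?thesis by auto
    next
      assume "stack_less L m x"
      then show ?thesis using m by auto
    qed
  qed
qed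

lemma stack_min_prop: "distinct L \<Longrightarrow> finite F \<Longrightarrow> F \<noteq> {} \<Longrightarrow> \<forall>S\<in>F. S \<subseteq> set L \<Longrightarrow>
  stack_min L F \<in> F \<and> (\<forall>S'\<in>F. S' \<noteq> stack_min L F \<longrightarrow> stack_less L (stack_min L F) S')"
proof -
  assume a: "distinct L" "finite F" "F \<noteq> {}" "\<forall>S\<in>F. S \<subseteq> set L"
  obtain m where m: "m \<in> F" "\<forall>S'\<in>F. S' \<noteq> m \<longrightarrow> stack_less L m S'" using stack_min_ex[OF a(1) a(2) a(3) a(4)] by blast
  have u: "\<And>S. S \<in> F \<and> (\<forall>S'\<in>F. S' \<noteq> S \<longrightarrow> stack_less L S S') \<Longrightarrow> S = m"
    using m stack_less_asym a by metis
  have "stack_min L F = m" unfolding stack_min_def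
    by (rule the_equality) (use m in blast, erule u)
  then show ?thesis using m by simp
qed

lemma board_fin: "is_board B \<Longrightarrow> finite (stk B x a)"
  unfolding is_board_def by (meson finite_Pow_iff finite_set finite_subset)

lemma thin_stk: "is_board B \<Longrightarrow> stk (thin_fun B) x a = (if stk B x a = {} then {} else {stack_min (ctrl B) (stk B x a)})"
  unfolding thin_fun_def by (simp add: Let_def)

lemma thin_min: "is_board B \<Longrightarrow> stk B x a \<noteq> {} \<Longrightarrow>
  stack_min (ctrl B) (stk B x a) \<in> stk B x a \<and>
  (\<forall>S'\<in>stk B x a. S' \<noteq> stack_min (ctrl B) (stk B x a) \<longrightarrow> stack_less (ctrl B) (stack_min (ctrl B) (stk B x a)) S')"
  by (rule stack_min_prop) (auto simp: is_board_def board_fin)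

lemma thin_sub: "is_board B \<Longrightarrow> stk (thin_fun B) x a \<subseteq> stk B x a"
  using thin_min thin_stk by (metis empty_subsetI insert_subset)

lemma thin_single: "is_board B \<Longrightarrow> S \<in> stk (thin_fun B) x a \<Longrightarrow> S' \<in> stk (thin_fun B) x a \<Longrightarrow> S = S'"
  by (simp add: thin_stk split: if_splits)

lemma occ_filter: "\<exists>P. occ L \<sigma> = filter P L" unfolding occ_def by blast

lemma occ_set: "set (occ L \<sigma>) = {g \<in> set L. \<exists>x a S. S \<in> \<sigma> x a \<and> g \<in> S}"
  unfolding occ_def by auto

lemma thin_ctrl: "ctrl (thin_fun B) = occ (ctrl B) (stk (thin_fun B))"
  unfolding thin_fun_def by (simp add: Let_def)

lemma thin_bset: "bset (thin_fun B) = bset B"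
  unfolding thin_fun_def by (simp add: Let_def)

lemma thin_board: "is_board B \<Longrightarrow> is_board (thin_fun B) \<and> weak_step B (thin_fun B)"
proof -
  assume b: "is_board B"
  have sub: "\<And>x a. stk (thin_fun B) x a \<subseteq> stk B x a" by (rule thin_sub[OF b])
  have w: "weak_step B (thin_fun B)" unfolding weak_step_def using sub thin_ctrl[of B] thin_bset[of B] by blast
  have "is_board (thin_fun B)" unfolding is_board_def
  proof (intro conjI allI ballI)
    show "finite (bset (thin_fun B))" using b by (simp add: thin_bset is_board_def)
    show "distinct (ctrl (thin_fun B))" using b by (simp add: thin_ctrl occ_def is_board_def)
    fix x a
    show "stk (thin_fun B) x a \<subseteq> Pow (set (ctrl (thin_fun B)))"
      using sub b unfolding thin_ctrl occ_set is_board_def by blast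
    show "x \<notin> bset (thin_fun B) \<longrightarrow> stk (thin_fun B) x a = {}"
      using sub b unfolding thin_bset is_board_def by blast
  next
    fix g assume "g \<in> set (ctrl (thin_fun B))"
    then obtain x a S where "S \<in> stk (thin_fun B) x a" "g \<in> S" unfolding thin_ctrl occ_set by blast
    moreover then have "x \<in> bset B" using sub b unfolding is_board_def by blast
    ultimately show "\<exists>x\<in>bset (thin_fun B). \<exists>a. \<exists>S\<in>stk (thin_fun B) x a. g \<in> S"
      by (auto simp: thin_bset)
  qed
  then show ?thesis using w by simp
qed




lemma reset_stk: "stk (reset_fun g B) x a = restr (ctrl B) g ` stk B x a"
  unfolding reset_fun_def by (simp add: Let_def)
lemma reset_ctrl: "ctrl (reset_fun g B) = occ (ctrl B) (stk (reset_fun g B))"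
  unfolding reset_fun_def by (simp add: Let_def)
lemma reset_bset: "bset (reset_fun g B) = bset B"
  unfolding reset_fun_def by (simp add: Let_def)

lemma restr_sub: "restr L g S \<subseteq> S" unfolding restr_def by auto

lemma reset_board: "is_board B \<Longrightarrow> is_board (reset_fun g B)"
proof -
  assume b: "is_board B"
  show "is_board (reset_fun g B)" unfolding is_board_def
  proof (intro conjI allI ballI)
    show "finite (bset (reset_fun g B))" using b by (simp add: reset_bset is_board_def)
    show "distinct (ctrl (reset_fun g B))" using b by (simp add: reset_ctrl occ_def is_board_def)
    fix x a
    show "stk (reset_fun g B) x a \<subseteq> Pow (set (ctrl (reset_fun g B)))"
    proof
      fix T assume T: "T \<in> stk (reset_fun g B) x a"
      then obtain S where S: "S \<in> stk B x a" "T = restr (ctrl B) g S" by (auto simp: reset_stk)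
      have "T \<subseteq> set (ctrl B)" using S b restr_sub unfolding is_board_def by blast
      then have "T \<subseteq> set (occ (ctrl B) (stk (reset_fun g B)))" using T unfolding occ_set by blast
      then show "T \<in> Pow (set (ctrl (reset_fun g B)))" by (simp add: reset_ctrl)
    qed
    show "x \<notin> bset (reset_fun g B) \<longrightarrow> stk (reset_fun g B) x a = {}"
      using b unfolding reset_bset reset_stk is_board_def by simp
  next
    fix h assume "h \<in> set (ctrl (reset_fun g B))"
    then obtain x a S where "S \<in> stk (reset_fun g B) x a" "h \<in> S" unfolding reset_ctrl occ_set by blast
    moreover then have "x \<in> bset B" using b unfolding is_board_def reset_stk by fastforce
    ultimately show "\<exists>x\<in>bset (reset_fun g B). \<exists>a. \<exists>S\<in>stk (reset_fun g B) x a. h \<in> S"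
      by (auto simp: reset_bset)
  qed
qed

lemma board_ctrl_occ: "is_board B \<Longrightarrow> g \<in> set (ctrl B) \<longleftrightarrow> (\<exists>x a S. S \<in> stk B x a \<and> g \<in> S)"
  unfolding is_board_def by blast

lemma covered_reset:
  assumes b: "is_board B" and c: "covered g' B" and gin: "g \<in> set (ctrl B)"
    and lt: "pos (ctrl B) g' < pos (ctrl B) g"
  shows "covered g' (reset_fun g B)"
proof -
  let ?L = "ctrl B"
  have d: "distinct ?L" using b by (simp add: is_board_def)
  have g'in: "g' \<in> set ?L" using c by (simp add: covered_def)
  obtain P where P: "ctrl (reset_fun g B) = filter P ?L" using occ_filter reset_ctrl by metis
  obtain x a S where S: "S \<in> stk B x a" "g' \<in> S" using g'in board_ctrl_occ[OF b] by blast
  have "g' \<in> restr ?L g S" unfolding restr_def using S lt gin g'in d by (auto simp: chip_le_pos)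
  moreover have "restr ?L g S \<in> stk (reset_fun g B) x a" using S by (simp add: reset_stk)
  ultimately have in1: "g' \<in> set (ctrl (reset_fun g B))"
    using board_ctrl_occ[OF reset_board[OF b]] by blast
  have "\<not> (\<exists>x a T. T \<in> stk (reset_fun g B) x a \<and> is_top (ctrl (reset_fun g B)) T g')"
  proof
    assume "\<exists>x a T. T \<in> stk (reset_fun g B) x a \<and> is_top (ctrl (reset_fun g B)) T g'"
    then obtain x a T where T: "T \<in> stk (reset_fun g B) x a" "is_top (ctrl (reset_fun g B)) T g'" by blast
    then obtain S where S: "S \<in> stk B x a" "T = restr ?L g S" by (auto simp: reset_stk)
    have Ssub: "S \<subseteq> set ?L" using S b unfolding is_board_def by blast
    show False
    proof (cases "g \<in> S")
      case True
      then have "g \<in> T" using S Ssub d by (auto simp: restr_def chip_le_pos)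
      then have "chip_le (ctrl (reset_fun g B)) g g'" using T(2) by (simp add: is_top_def)
      then have "chip_le ?L g g'" using P d chip_le_filter by metis
      then show False using lt d by (simp add: chip_le_pos)
    next
      case False
      then have "T = S" using S by (simp add: restr_def)
      then have "is_top ?L S g'" using T(2) P d chip_le_filter unfolding is_top_def by metis
      then show False using c S(1) by (auto simp: covered_def)
    qed
  qed
  then show ?thesis using in1 by (simp add: covered_def)
qed

lemma pop_bset: "bset (pop_fun B) = bset B" by (simp add: pop_fun_def)
lemma pop_ctrl: "ctrl (pop_fun B) = ctrl B" by (simp add: pop_fun_def)
lemma pop_stk: "stk (pop_fun B) x a = (if a = bot \<and> x \<in> bset B \<and> stk B x bot = {} then {{}} else stk B x a)"
  by (simp add: pop_fun_def)
lemma pop_mono: "stk B x a \<subseteq> stk (pop_fun B) x a" by (auto simp: pop_stk)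
lemma pop_ne: "x \<in> bset B \<Longrightarrow> stk (pop_fun B) x bot \<noteq> {}" by (auto simp: pop_stk)

lemma pop_board: "is_board B \<Longrightarrow> is_board (pop_fun B) \<and> pop_step B (pop_fun B)"
proof -
  assume b: "is_board B"
  have "is_board (pop_fun B)" unfolding is_board_def
  proof (intro conjI allI ballI)
    show "finite (bset (pop_fun B))" using b by (simp add: pop_bset is_board_def)
    show "distinct (ctrl (pop_fun B))" using b by (simp add: pop_ctrl is_board_def)
    fix x a
    show "stk (pop_fun B) x a \<subseteq> Pow (set (ctrl (pop_fun B)))"
      using b unfolding pop_stk pop_ctrl is_board_def by auto
    show "x \<notin> bset (pop_fun B) \<longrightarrow> stk (pop_fun B) x a = {}"
      using b unfolding pop_bset pop_stk is_board_def by auto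
  next
    fix h assume "h \<in> set (ctrl (pop_fun B))"
    then obtain x a S where "S \<in> stk B x a" "h \<in> S" "x \<in> bset B" using b unfolding pop_ctrl is_board_def by blast
    then show "\<exists>x\<in>bset (pop_fun B). \<exists>a. \<exists>S\<in>stk (pop_fun B) x a. h \<in> S"
      using pop_mono[of B x a] by (auto simp: pop_bset)
  qed
  moreover have "pop_step B (pop_fun B)" unfolding pop_step_def
    by (auto simp: pop_bset pop_ctrl pop_stk)
  ultimately show ?thesis by simp
qed

definition sig :: "('x,'a::sup) mor \<Rightarrow> ('x,'a) board \<Rightarrow> 'x \<Rightarrow> 'a \<Rightarrow> nat set set" where
  "sig \<tau> B = (\<lambda>y a. {S. \<exists>x b c. (x,c,y) \<in> mrel \<tau> \<and> S \<in> stk B x b \<and> a = sup b c})"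

definition succ_stk :: "'a::bounded_semilattice_sup_bot \<Rightarrow> ('x,'a) mor \<Rightarrow> ('x,'a) board \<Rightarrow> ('x \<Rightarrow> nat) \<Rightarrow> 'x \<Rightarrow> 'a \<Rightarrow> nat set set" where
  "succ_stk \<alpha> \<tau> B \<iota> = (\<lambda>y a. if a = \<alpha> then {}
                               else if a = bot then sig \<tau> B y bot \<union> {insert (\<iota> y) S | S. S \<in> sig \<tau> B y \<alpha>}
                               else sig \<tau> B y a)"

lemma succ_step_iff: "succ_step \<alpha> \<tau> B B' \<longleftrightarrow> bset B = mdom \<tau> \<and>
   (\<exists>Lo \<iota>. distinct Lo \<and> set Lo \<inter> set (ctrl B) = {} \<and>
           bij_betw \<iota> {y \<in> mcod \<tau>. sig \<tau> B y \<alpha> \<noteq> {}} (set Lo) \<and>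
           B' = \<lparr> bset = mcod \<tau>, ctrl = occ (ctrl B) (sig \<tau> B) @ Lo, stk = succ_stk \<alpha> \<tau> B \<iota> \<rparr>)"
  unfolding succ_step_def sig_def succ_stk_def Let_def by simp

lemma sig_out: "is_morphism \<tau> \<Longrightarrow> y \<notin> mcod \<tau> \<Longrightarrow> sig \<tau> B y a = {}"
  unfolding sig_def is_morphism_def by blast

lemma sig_sub: "is_board B \<Longrightarrow> S \<in> sig \<tau> B y a \<Longrightarrow> S \<subseteq> set (occ (ctrl B) (sig \<tau> B))"
  unfolding occ_set is_board_def by (auto simp: sig_def) blast

lemma succ_board:
  assumes b: "is_board B" and m: "is_morphism \<tau>" and s: "succ_step \<alpha> \<tau> B B'" and ab: "\<alpha> \<noteq> bot"
  shows "is_board B'"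
proof -
  obtain Lo \<iota> where lo: "distinct Lo" "set Lo \<inter> set (ctrl B) = {}"
    "bij_betw \<iota> {y \<in> mcod \<tau>. sig \<tau> B y \<alpha> \<noteq> {}} (set Lo)"
    and B': "B' = \<lparr> bset = mcod \<tau>, ctrl = occ (ctrl B) (sig \<tau> B) @ Lo, stk = succ_stk \<alpha> \<tau> B \<iota> \<rparr>"
    using s unfolding succ_step_iff by blast
  have ioc: "\<And>y. y \<in> mcod \<tau> \<Longrightarrow> sig \<tau> B y \<alpha> \<noteq> {} \<Longrightarrow> \<iota> y \<in> set Lo" using lo(3) bij_betwE by blast
  show ?thesis unfolding is_board_def
  proof (intro conjI allI ballI)
    show "finite (bset B')" using m B' by (simp add: is_morphism_def)
    have "set (occ (ctrl B) (sig \<tau> B)) \<subseteq> set (ctrl B)" by (simp add: occ_def)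
    then show "distinct (ctrl B')" using lo b B' by (auto simp: occ_def is_board_def)
    fix y a
    show "stk B' y a \<subseteq> Pow (set (ctrl B'))"
    proof
      fix T assume T: "T \<in> stk B' y a"
      show "T \<in> Pow (set (ctrl B'))"
      proof (cases "a = \<alpha> \<or> a \<noteq> bot")
        case True
        then have "T \<in> sig \<tau> B y a" using T B' by (auto simp: succ_stk_def split: if_splits)
        from sig_sub[OF b this] show ?thesis using B' by auto
      next
        case False
        then have a0: "a = bot" "a \<noteq> \<alpha>" by auto
        then have "T \<in> sig \<tau> B y bot \<or> (\<exists>S. S \<in> sig \<tau> B y \<alpha> \<and> T = insert (\<iota> y) S)"
          using T B' by (auto simp: succ_stk_def)
        then show ?thesis
        proof
          assume "T \<in> sig \<tau> B y bot" from sig_sub[OF b this] show ?thesis using B' by auto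
        next
          assume "\<exists>S. S \<in> sig \<tau> B y \<alpha> \<and> T = insert (\<iota> y) S"
          then obtain S where S: "S \<in> sig \<tau> B y \<alpha>" "T = insert (\<iota> y) S" by blast
          then have "y \<in> mcod \<tau>" using sig_out[OF m] by blast
          then have "\<iota> y \<in> set Lo" using ioc S by blast
          then show ?thesis using S sig_sub[OF b S(1)] B' by auto
        qed
      qed
    qed
    show "y \<notin> bset B' \<longrightarrow> stk B' y a = {}"
      using sig_out[OF m] B' by (auto simp: succ_stk_def)
  next
    fix h assume h: "h \<in> set (ctrl B')"
    show "\<exists>x\<in>bset B'. \<exists>a. \<exists>S\<in>stk B' x a. h \<in> S"
    proof (cases "h \<in> set Lo")
      case True
      from True lo(3) have "h \<in> \<iota> ` {y \<in> mcod \<tau>. sig \<tau> B y \<alpha> \<noteq> {}}" by (simp add: bij_betw_def)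
      then obtain y where y: "y \<in> mcod \<tau>" "sig \<tau> B y \<alpha> \<noteq> {}" "\<iota> y = h" by blast
      then obtain S where "S \<in> sig \<tau> B y \<alpha>" by blast
      then have "insert h S \<in> stk B' y bot" using B' y ab by (auto simp: succ_stk_def)
      moreover have "y \<in> bset B'" using y B' by simp
      ultimately show ?thesis by blast
    next
      case False
      then have "h \<in> set (occ (ctrl B) (sig \<tau> B))" using h B' by simp
      then obtain y a S where yS: "S \<in> sig \<tau> B y a" "h \<in> S" unfolding occ_set by blast
      then have y: "y \<in> mcod \<tau>" using sig_out[OF m] by blast
      show ?thesis
      proof (cases "a = \<alpha>")
        case True
        then have "insert (\<iota> y) S \<in> stk B' y bot" using B' yS ab by (auto simp: succ_stk_def)
        moreover have "h \<in> insert (\<iota> y) S" using yS by simp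
        moreover have "y \<in> bset B'" using y B' by simp
        ultimately show ?thesis by blast
      next
        case False
        then have "S \<in> stk B' y a" using B' yS by (auto simp: succ_stk_def)
        moreover have "y \<in> bset B'" using y B' by simp
        ultimately show ?thesis using yS by blast
      qed
    qed
  qed
qed

lemma succ_ex:
  assumes b: "is_board B" and m: "is_morphism \<tau>" and bs: "bset B = mdom \<tau>"
  shows "\<exists>B'. succ_step \<alpha> \<tau> B B'"
proof -
  let ?Y = "{y \<in> mcod \<tau>. sig \<tau> B y \<alpha> \<noteq> {}}"
  have fY: "finite ?Y" using m by (simp add: is_morphism_def)
  obtain h where h: "bij_betw h ?Y {0..<card ?Y}" using ex_bij_betw_finite_nat[OF fY] by blast
  define m0 where "m0 = Suc (Max (insert 0 (set (ctrl B))))"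
  have m0: "\<forall>z\<in>set (ctrl B). z < m0" unfolding m0_def by (simp add: le_imp_less_Suc)
  define Lo where "Lo = [m0..<m0 + card ?Y]"
  have "bij_betw (\<lambda>n. m0 + n) {0..<card ?Y} (set Lo)"
    unfolding Lo_def bij_betw_def by (auto simp: inj_on_def image_iff)
  then have bj: "bij_betw ((\<lambda>n. m0 + n) \<circ> h) ?Y (set Lo)" using h bij_betw_trans by blast
  have "set Lo \<inter> set (ctrl B) = {}" using m0 unfolding Lo_def by force
  moreover have "distinct Lo" unfolding Lo_def by simp
  ultimately show ?thesis unfolding succ_step_iff using bs bj by blast
qed




lemma pos_filter_less: "distinct L \<Longrightarrow> u \<in> set (filter P L) \<Longrightarrow> v \<in> set (filter P L) \<Longrightarrow>
   pos (filter P L) u < pos (filter P L) v \<longleftrightarrow> pos L u < pos L v"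
  using pos_filter_mono[of L v P u] by (simp add: not_le[symmetric])

locale gt =
  fixes \<alpha> :: "'a::bounded_semilattice_sup_bot" and \<tau> :: "('x,'a) mor" and B :: "('x,'a) board"
    and Bs :: "('x,'a) board list"
  assumes ab: "\<alpha> \<noteq> bot" and bB: "is_board B" and bsB: "bset B = mdom \<tau>" and mt: "is_morphism \<tau>"
    and gtr: "greedy_trans \<alpha> \<tau> B Bs"
begin

definition "cs = rev (filter (\<lambda>\<gamma>. covered \<gamma> B) (ctrl B))"
definition "k = length cs"

lemma gfacts: "length Bs = k + 4" "Bs ! 0 = B" "\<And>j. j<k \<Longrightarrow> Bs ! Suc j = reset_fun (cs ! j) (Bs ! j)"
  "Bs ! (k + 1) = pop_fun (Bs ! k)" "succ_step \<alpha> \<tau> (Bs ! (k + 1)) (Bs ! (k + 2))"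
  "Bs ! (k + 3) = thin_fun (Bs ! (k + 2))"
  using gtr unfolding greedy_trans_def cs_def[symmetric] k_def[symmetric] Let_def by auto

lemma dL: "distinct (ctrl B)" using bB by (simp add: is_board_def)

lemma resets_facts: "j \<le> k \<Longrightarrow> is_board (Bs ! j) \<and> (\<exists>P. ctrl (Bs ! j) = filter P (ctrl B)) \<and> bset (Bs ! j) = bset B"
proof (induction j)
  case 0
  have "ctrl B = filter (\<lambda>_. True) (ctrl B)" by simp
  then show ?case using gfacts(2) bB by metis
next
  case (Suc j)
  then have IH: "is_board (Bs ! j)" "\<exists>P. ctrl (Bs ! j) = filter P (ctrl B)" "bset (Bs ! j) = bset B" by auto
  have e: "Bs ! Suc j = reset_fun (cs ! j) (Bs ! j)" using gfacts(3) Suc by simp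
  obtain P where P: "ctrl (Bs ! j) = filter P (ctrl B)" using IH by blast
  obtain Q where Q: "ctrl (Bs ! Suc j) = filter Q (ctrl (Bs ! j))" using e reset_ctrl occ_filter by metis
  have "ctrl (Bs ! Suc j) = filter (\<lambda>x. P x \<and> Q x) (ctrl B)" using P Q by simp
  then show ?case using e reset_board[OF IH(1)] IH(3) reset_bset by metis
qed

lemma cs_covered: "i < k \<Longrightarrow> covered (cs ! i) B"
proof -
  assume "i < k"
  then have "cs ! i \<in> set cs" by (simp add: k_def)
  then show ?thesis by (simp add: cs_def)
qed

lemma cs_order: "i < k \<Longrightarrow> j < i \<Longrightarrow> pos (ctrl B) (cs ! i) < pos (ctrl B) (cs ! j)"
proof -
  assume ik: "i < k" and ji: "j < i"
  let ?fl = "filter (\<lambda>\<gamma>. covered \<gamma> B) (ctrl B)"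
  have n: "length ?fl = k" by (simp add: k_def cs_def)
  have ci: "cs ! i = ?fl ! (k - 1 - i)" "cs ! j = ?fl ! (k - 1 - j)" using ik ji n by (auto simp: cs_def rev_nth)
  have df: "distinct ?fl" using dL by simp
  have "pos ?fl (cs ! i) < pos ?fl (cs ! j)" using ci pos_nth[OF df] ik ji n by auto
  moreover have "cs ! i \<in> set cs" "cs ! j \<in> set cs" using ik ji by (auto simp: k_def)
  then have "cs ! i \<in> set ?fl" "cs ! j \<in> set ?fl" by (simp_all add: cs_def)
  ultimately show ?thesis using pos_filter_less[OF dL] by blast
qed

lemma covered_in: "covered g B' \<Longrightarrow> g \<in> set (ctrl B')" by (simp add: covered_def)

lemma cs_cov_j: "j \<le> i \<Longrightarrow> i < k \<Longrightarrow> covered (cs ! i) (Bs ! j)"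
proof (induction j arbitrary: i)
  case 0 then show ?case using cs_covered gfacts(2) by simp
next
  case (Suc j)
  have ci: "covered (cs ! i) (Bs ! j)" "covered (cs ! j) (Bs ! j)" using Suc by auto
  have b: "is_board (Bs ! j)" using resets_facts Suc by simp
  have "j \<le> k" using Suc by simp
  then obtain P where P: "ctrl (Bs ! j) = filter P (ctrl B)" using resets_facts by blast
  have "pos (ctrl (Bs ! j)) (cs ! i) < pos (ctrl (Bs ! j)) (cs ! j)"
    using cs_order[of i j] Suc.prems ci covered_in P pos_filter_less[OF dL] by (metis Suc_le_lessD)
  then have "covered (cs ! i) (reset_fun (cs ! j) (Bs ! j))"
    using covered_reset[OF b ci(1) covered_in[OF ci(2)]] by blast
  then show ?case using gfacts(3) Suc by simp
qed

lemma reset_steps: "j < k \<Longrightarrow> reset_step (cs ! j) (Bs ! j) (Bs ! Suc j) \<and> cs ! j \<in> set (ctrl (Bs ! j))"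
  using cs_cov_j[of j j] gfacts(3) by (simp add: reset_step_def covered_def)

lemma covered_reset_ex: "covered g B \<Longrightarrow> \<exists>j<k. reset_step g (Bs ! j) (Bs ! Suc j)"
proof -
  assume "covered g B"
  then have "g \<in> set cs" using covered_in by (simp add: cs_def)
  then obtain j where "j < k" "cs ! j = g" by (auto simp: k_def in_set_conv_nth)
  then show ?thesis using reset_steps by blast
qed

lemma bk: "is_board (Bs ! k)" "bset (Bs ! k) = bset B" using resets_facts by auto
lemma bk1: "is_board (Bs ! (k+1))" "pop_step (Bs ! k) (Bs ! (k+1))" "bset (Bs ! (k+1)) = mdom \<tau>"
proof -
  show "is_board (Bs ! (k+1))" "pop_step (Bs ! k) (Bs ! (k+1))" using pop_board[OF bk(1)] gfacts(4) by auto
  have "bset (Bs ! (k+1)) = bset (Bs ! k)" using gfacts(4) pop_bset by metis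
  then show "bset (Bs ! (k+1)) = mdom \<tau>" using bk(2) bsB by simp
qed
lemma bk2: "is_board (Bs ! (k+2))" using succ_board[OF bk1(1) mt gfacts(5) ab] .
lemma bk3: "is_board (Bs ! (k+3))" "weak_step (Bs ! (k+2)) (Bs ! (k+3))"
  using thin_board[OF bk2] gfacts(6) by auto
lemma bset3: "bset (Bs ! (k+3)) = mcod \<tau>"
proof -
  have "bset (Bs ! (k+3)) = bset (Bs ! (k+2))" using gfacts(6) thin_bset by metis
  moreover have "bset (Bs ! (k+2)) = mcod \<tau>" using gfacts(5) unfolding succ_step_iff by auto
  ultimately show ?thesis by simp
qed

lemma all_boards: "j < length Bs \<Longrightarrow> is_board (Bs ! j)"
proof -
  assume "j < length Bs"
  then have "j \<le> k \<or> j = k+1 \<or> j = k+2 \<or> j = k+3" using gfacts(1) by auto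
  then show ?thesis using resets_facts bk1 bk2 bk3 by auto
qed

end




definition nxt :: "'a::bounded_semilattice_sup_bot \<Rightarrow> 'a \<Rightarrow> 'a \<Rightarrow> 'a" where
  "nxt \<alpha> a w = (if sup a w = \<alpha> then bot else sup a w)"

lemma board_sub: "is_board X \<Longrightarrow> S \<in> stk X x a \<Longrightarrow> S \<subseteq> set (ctrl X)"
  unfolding is_board_def by blast

context gt
begin

abbreviation "L \<equiv> ctrl B"

lemma rchain:
  assumes S: "S \<in> stk B v a" and G: "G \<subseteq> S" and nc: "\<forall>g\<in>G. \<not> covered g B"
    and below: "\<forall>g\<in>G. \<forall>z\<in>S-G. pos L g < pos L z"
  shows "j \<le> k \<Longrightarrow> \<exists>T\<in>stk (Bs ! j) v a. T \<subseteq> S \<and> G \<subseteq> T \<and>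
      (\<forall>d. d \<in> S - G \<and> (\<forall>z\<in>S-G. pos L d \<le> pos L z) \<longrightarrow> d \<in> T)"
proof (induction j)
  case 0 then show ?case using S G gfacts(2) by auto
next
  case (Suc j)
  then obtain T where T: "T\<in>stk (Bs ! j) v a" "T \<subseteq> S" "G \<subseteq> T"
      "\<forall>d. d \<in> S - G \<and> (\<forall>z\<in>S-G. pos L d \<le> pos L z) \<longrightarrow> d \<in> T" by auto
  have jk: "j < k" "j \<le> k" using Suc by auto
  have bj: "is_board (Bs ! j)" using resets_facts jk by simp
  obtain P where P: "ctrl (Bs ! j) = filter P L" using resets_facts jk by blast
  let ?c = "cs ! j"
  define T' where "T' = restr (ctrl (Bs ! j)) ?c T"
  have T'in: "T' \<in> stk (Bs ! Suc j) v a" using gfacts(3)[OF jk(1)] T(1) by (simp add: reset_stk T'_def)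
  have T'sub: "T' \<subseteq> T" unfolding T'_def by (rule restr_sub)
  have Tctrl: "T \<subseteq> set (ctrl (Bs ! j))" using board_sub[OF bj T(1)] .
  have key: "\<And>z. z \<in> T \<Longrightarrow> ?c \<in> T \<Longrightarrow> pos L z \<le> pos L ?c \<Longrightarrow> z \<in> T'"
  proof -
    fix z assume z: "z \<in> T" "?c \<in> T" "pos L z \<le> pos L ?c"
    have "z \<in> set (filter P L)" "?c \<in> set (filter P L)" using z Tctrl P by auto
    then have "chip_le (ctrl (Bs ! j)) z ?c" using P z(3) dL chip_le_filter chip_le_pos by auto
    then show "z \<in> T'" using z unfolding T'_def restr_def by simp
  qed
  have cG: "?c \<notin> G" using nc cs_covered[OF jk(1)] by blast
  have GT': "G \<subseteq> T'"
  proof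
    fix g assume g: "g \<in> G"
    show "g \<in> T'"
    proof (cases "?c \<in> T")
      case True
      then have "?c \<in> S - G" using T cG by auto
      then have "pos L g < pos L ?c" using below g by blast
      then have "pos L g \<le> pos L ?c" by simp
      then show ?thesis using key True g T by blast
    next
      case False then show ?thesis using g T unfolding T'_def restr_def by auto
    qed
  qed
  have dT': "\<forall>d. d \<in> S - G \<and> (\<forall>z\<in>S-G. pos L d \<le> pos L z) \<longrightarrow> d \<in> T'"
  proof (intro allI impI)
    fix d assume d: "d \<in> S - G \<and> (\<forall>z\<in>S-G. pos L d \<le> pos L z)"
    then have dT: "d \<in> T" using T by blast
    show "d \<in> T'"
    proof (cases "?c \<in> T")
      case True
      then have "?c \<in> S - G" using T cG by auto
      then have "pos L d \<le> pos L ?c" using d by blast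
      then show ?thesis using key True dT by blast
    next
      case False then show ?thesis using dT unfolding T'_def restr_def by auto
    qed
  qed
  have "T' \<subseteq> S" using T'sub T(2) by blast
  then show ?case using T'in GT' dT' by (intro bexI[OF _ T'in] conjI)
qed

lemma Tk_facts:
  assumes T1: "T \<in> stk (Bs ! (k+1)) v a" and e: "(v,w,v') \<in> mrel \<tau>"
  shows "\<exists>C\<in>stk (Bs ! (k+2)) v' (nxt \<alpha> a w). (if sup a w = \<alpha> then (\<exists>n. n \<notin> set (ctrl (Bs ! (k+1))) \<and> n \<in> set (ctrl (Bs ! (k+2))) \<and> C = insert n T) else C = T)
     \<and> T \<subseteq> set (occ (ctrl (Bs ! (k+1))) (sig \<tau> (Bs ! (k+1))))
     \<and> ctrl (Bs ! (k+2)) = occ (ctrl (Bs ! (k+1))) (sig \<tau> (Bs ! (k+1))) @ (drop (length (occ (ctrl (Bs ! (k+1))) (sig \<tau> (Bs ! (k+1))))) (ctrl (Bs ! (k+2))))"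
proof -
  let ?B1 = "Bs ! (k+1)" and ?B2 = "Bs ! (k+2)"
  obtain Lo \<iota> where lo: "distinct Lo" "set Lo \<inter> set (ctrl ?B1) = {}"
    "bij_betw \<iota> {y \<in> mcod \<tau>. sig \<tau> ?B1 y \<alpha> \<noteq> {}} (set Lo)"
    and B2: "?B2 = \<lparr> bset = mcod \<tau>, ctrl = occ (ctrl ?B1) (sig \<tau> ?B1) @ Lo, stk = succ_stk \<alpha> \<tau> ?B1 \<iota> \<rparr>"
    using gfacts(5) unfolding succ_step_iff by blast
  have Ts: "T \<in> sig \<tau> ?B1 v' (sup a w)" using T1 e unfolding sig_def by blast
  have v': "v' \<in> mcod \<tau>" using e mt unfolding is_morphism_def by blast
  have sub: "T \<subseteq> set (occ (ctrl ?B1) (sig \<tau> ?B1))" using sig_sub[OF bk1(1) Ts] .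
  have c2: "ctrl ?B2 = occ (ctrl ?B1) (sig \<tau> ?B1) @ (drop (length (occ (ctrl ?B1) (sig \<tau> ?B1))) (ctrl ?B2))"
    using B2 by simp
  show ?thesis
  proof (cases "sup a w = \<alpha>")
    case True
    then have "\<iota> v' \<in> set Lo" using v' Ts lo(3) bij_betwE by blast
    moreover have "insert (\<iota> v') T \<in> stk ?B2 v' (nxt \<alpha> a w)"
      using B2 True Ts ab by (auto simp: succ_stk_def nxt_def)
    ultimately show ?thesis using lo(2) B2 sub c2 True by (intro bexI[of _ "insert (\<iota> v') T"]) auto
  next
    case False
    then have "T \<in> stk ?B2 v' (nxt \<alpha> a w)"
      using B2 Ts by (auto simp: succ_stk_def nxt_def)
    then show ?thesis using sub c2 False by auto
  qed
qed

end



definition ismin :: "nat list \<Rightarrow> nat set \<Rightarrow> nat \<Rightarrow> bool" where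
  "ismin L X d \<longleftrightarrow> d \<in> X \<and> (\<forall>z\<in>X. pos L d \<le> pos L z)"

lemma ismin_ex: "finite X \<Longrightarrow> X \<noteq> {} \<Longrightarrow> \<exists>d. ismin L X d"
  unfolding ismin_def using ex_min_pos by blast

context gt
begin

lemma trace_step:
  assumes S: "S \<in> stk B v a" and e: "(v,w,v') \<in> mrel \<tau>" and G: "G \<subseteq> S" and nc: "\<forall>g\<in>G. \<not> covered g B"
    and below: "\<forall>g\<in>G. \<forall>z\<in>S-G. pos L g < pos L z"
  shows "\<forall>j \<le> k+2. G \<subseteq> set (ctrl (Bs ! j)) \<and> (\<forall>d. ismin L (S-G) d \<longrightarrow> d \<in> set (ctrl (Bs ! j)))"
    and "S' \<in> stk (Bs ! (k+3)) v' (nxt \<alpha> a w) \<Longrightarrow> G \<subseteq> S' \<Longrightarrow> S - G \<noteq> {} \<or> sup a w = \<alpha> \<Longrightarrow> S' - G \<noteq> {}"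
    and "S' \<in> stk (Bs ! (k+3)) v' (nxt \<alpha> a w) \<Longrightarrow> G \<subseteq> S' \<Longrightarrow> ismin L (S-G) d \<Longrightarrow>
          \<exists>d'. ismin (ctrl (Bs ! (k+3))) (S'-G) d' \<and> pos (ctrl (Bs ! (k+3))) d' \<le> pos L d \<and>
              (pos (ctrl (Bs ! (k+3))) d' = pos L d \<longrightarrow> d' = d)"
proof -
  note rc = rchain[OF S G nc below]
  have rc': "\<And>j. j \<le> k \<Longrightarrow> \<exists>T\<in>stk (Bs ! j) v a. T \<subseteq> S \<and> G \<subseteq> T \<and> (\<forall>d. ismin L (S-G) d \<longrightarrow> d \<in> T)"
    using rc unfolding ismin_def by blast
  obtain T where T: "T \<in> stk (Bs ! k) v a" "T \<subseteq> S" "G \<subseteq> T" "\<forall>d. ismin L (S-G) d \<longrightarrow> d \<in> T"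
    using rc'[of k] by auto
  let ?B1 = "Bs ! (k+1)" and ?B2 = "Bs ! (k+2)" and ?B3 = "Bs ! (k+3)"
  have T1: "T \<in> stk ?B1 v a" using T(1) gfacts(4) pop_mono by (metis subsetD)
  let ?O = "occ (ctrl ?B1) (sig \<tau> ?B1)"
  obtain C where C: "C \<in> stk ?B2 v' (nxt \<alpha> a w)"
    "if sup a w = \<alpha> then (\<exists>n. n \<notin> set (ctrl ?B1) \<and> n \<in> set (ctrl ?B2) \<and> C = insert n T) else C = T"
    and TO: "T \<subseteq> set ?O" and c2: "ctrl ?B2 = ?O @ drop (length ?O) (ctrl ?B2)"
    using Tk_facts[OF T1 e] by blast
  have TC: "T \<subseteq> C" using C(2) by (auto split: if_splits)
  have OB1: "set ?O \<subseteq> set (ctrl ?B1)" by (simp add: occ_def)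
  show "\<forall>j \<le> k+2. G \<subseteq> set (ctrl (Bs ! j)) \<and> (\<forall>d. ismin L (S-G) d \<longrightarrow> d \<in> set (ctrl (Bs ! j)))"
  proof (intro allI impI)
    fix j assume j: "j \<le> k+2"
    have "\<exists>x a' U. U \<in> stk (Bs ! j) x a' \<and> G \<subseteq> U \<and> (\<forall>d. ismin L (S-G) d \<longrightarrow> d \<in> U)"
    proof -
      consider "j \<le> k" | "j = k+1" | "j = k+2" using j by linarith
      then show ?thesis
      proof cases
        case 1
        then obtain U where "U\<in>stk (Bs ! j) v a" "G \<subseteq> U" "\<forall>d. ismin L (S-G) d \<longrightarrow> d \<in> U"
          using rc' by blast
        then show ?thesis by blast
      next
        case 2 then show ?thesis using T1 T(3,4) by blast
      next
        case 3
        have "G \<subseteq> C" "\<forall>d. ismin L (S-G) d \<longrightarrow> d \<in> C" using T(3,4) TC by blast+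
        then show ?thesis using C(1) 3 by blast
      qed
    qed
    moreover have "is_board (Bs ! j)" using all_boards j gfacts(1) by simp
    ultimately show "G \<subseteq> set (ctrl (Bs ! j)) \<and> (\<forall>d. ismin L (S-G) d \<longrightarrow> d \<in> set (ctrl (Bs ! j)))"
      using board_sub by (metis subset_iff)
  qed
  have d2: "distinct (ctrl ?B2)" using bk2 by (simp add: is_board_def)
  have Fne: "stk ?B2 v' (nxt \<alpha> a w) \<noteq> {}" using C(1) by blast
  have S'eq: "\<And>S'. S' \<in> stk ?B3 v' (nxt \<alpha> a w) \<Longrightarrow> S' \<in> stk ?B2 v' (nxt \<alpha> a w) \<and> (S' = C \<or> stack_less (ctrl ?B2) S' C)"
  proof -
    fix S' assume "S' \<in> stk ?B3 v' (nxt \<alpha> a w)"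
    then have "S' = stack_min (ctrl ?B2) (stk ?B2 v' (nxt \<alpha> a w))" using gfacts(6) thin_stk[OF bk2] Fne by auto
    then show "S' \<in> stk ?B2 v' (nxt \<alpha> a w) \<and> (S' = C \<or> stack_less (ctrl ?B2) S' C)"
      using thin_min[OF bk2 Fne] C(1) by metis
  qed
  have GC: "G \<subseteq> C" using T(3) TC by blast
  show c1: "S' - G \<noteq> {}" if S': "S' \<in> stk ?B3 v' (nxt \<alpha> a w)" and GS': "G \<subseteq> S'" and h: "S - G \<noteq> {} \<or> sup a w = \<alpha>" for S'
  proof -
    have "S' = C \<or> stack_less (ctrl ?B2) S' C" using S'eq[OF S'] by blast
    then show ?thesis
    proof
      assume SC: "S' = C"
      have "C - G \<noteq> {}"
      proof (cases "sup a w = \<alpha>")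
        case True
        then obtain n where n: "n \<notin> set (ctrl ?B1)" "C = insert n T" using C(2) by auto
        then have "n \<notin> G" using T(3) TO OB1 by blast
        then show ?thesis using n by blast
      next
        case False
        then have "S - G \<noteq> {}" using h by simp
        moreover have "finite (S - G)" using board_sub[OF bB S] finite_subset by blast
        ultimately obtain d where "ismin L (S-G) d" using ismin_ex by blast
        then have "d \<in> C - G" using T(4) TC unfolding ismin_def by blast
        then show ?thesis by blast
      qed
      then show ?thesis using SC by simp
    next
      assume "stack_less (ctrl ?B2) S' C"
      then obtain g where "g \<in> S' - C" unfolding stack_less_def by blast
      then show ?thesis using GC by blast
    qed
  qed
  show "\<exists>d'. ismin (ctrl ?B3) (S'-G) d' \<and> pos (ctrl ?B3) d' \<le> pos L d \<and>
              (pos (ctrl ?B3) d' = pos L d \<longrightarrow> d' = d)"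
    if S': "S' \<in> stk ?B3 v' (nxt \<alpha> a w)" and GS': "G \<subseteq> S'" and dm: "ismin L (S-G) d" for S' d
  proof -
    let ?L2 = "ctrl ?B2" and ?L3 = "ctrl ?B3"
    have dT: "d \<in> T" using T(4) dm by blast
    have dC: "d \<in> C" using dT TC by blast
    have dG: "d \<in> S - G" using dm unfolding ismin_def by blast
    have ne: "S' - G \<noteq> {}" using c1[OF S' GS'] dG by blast
    have S'3: "S' \<subseteq> set ?L3" using board_sub[OF bk3(1) S'] .
    obtain Q where Q: "?L3 = filter Q ?L2" using gfacts(6) thin_ctrl occ_filter by metis
    have fin: "finite (S' - G)" using S'3 finite_subset by blast
    obtain d' where d': "ismin ?L3 (S'-G) d'" using ismin_ex[OF fin ne] by blast
    have d'3: "d' \<in> set ?L3" using d' S'3 unfolding ismin_def by blast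
    have dO: "d \<in> set ?O" using dT TO by blast
    have "set ?L2 = set ?O \<union> set (drop (length ?O) ?L2)" using c2 by (metis set_append)
    then have d2in: "d \<in> set ?L2" using dO by blast
    have S'eq2: "S' \<in> stk ?B2 v' (nxt \<alpha> a w)" "S' = C \<or> stack_less ?L2 S' C" using S'eq[OF S'] by auto
    have S'2: "S' \<subseteq> set ?L2" using board_sub[OF bk2 S'eq2(1)] .
    have C2: "C \<subseteq> set ?L2" using board_sub[OF bk2 C(1)] .
    have A: "pos ?L2 d' \<le> pos ?L2 d"
    proof (cases "d \<in> S'")
      case True
      then have "pos ?L3 d' \<le> pos ?L3 d" using d' dG unfolding ismin_def by blast
      moreover have "d \<in> set ?L3" using True S'3 by blast
      ultimately show ?thesis using pos_filter_mono[OF d2, of d' Q d] Q d'3 by simp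
    next
      case False
      then have "S' \<noteq> C" using dC by blast
      then have "stack_less ?L2 S' C" using S'eq2 by blast
      then obtain g where g: "g \<in> S' - C" "\<forall>z\<in>(S'-C)\<union>(C-S'). pos ?L2 g \<le> pos ?L2 z"
        using stack_less_pos[OF d2 S'2 C2] by blast
      have "pos ?L2 g \<le> pos ?L2 d" using g(2) dC False by blast
      moreover have "g \<in> S' - G" using g(1) GC by blast
      then have "pos ?L3 d' \<le> pos ?L3 g" using d' unfolding ismin_def by blast
      moreover have "g \<in> set ?L3" using g(1) S'3 by blast
      ultimately show ?thesis using pos_filter_mono[OF d2, of d' Q g] Q d'3 by simp
    qed
    have B: "pos ?L3 d' \<le> pos ?L2 d'" using pos_filter_le[OF d2, of d' Q] Q d'3 by simp
    have dd2: "distinct (?O @ drop (length ?O) ?L2)" using d2 c2 by metis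
    have C1: "pos ?L2 d = pos ?O d" using pos_append1[OF dd2 dO] c2 by metis
    have d1: "distinct (ctrl ?B1)" using bk1(1) by (simp add: is_board_def)
    obtain Q1 where Q1: "?O = filter Q1 (ctrl ?B1)" using occ_filter by blast
    have C2': "pos ?O d \<le> pos (ctrl ?B1) d" using pos_filter_le[OF d1, of d Q1] Q1 dO by simp
    have e1: "ctrl ?B1 = ctrl (Bs ! k)" using gfacts(4) pop_ctrl by metis
    obtain P where P: "ctrl (Bs ! k) = filter P L" using resets_facts by blast
    have C3: "pos (ctrl ?B1) d \<le> pos L d" using pos_filter_le[OF dL, of d P] P e1 dO OB1 by auto
    have "pos ?L3 d' \<le> pos L d" using A B C1 C2' C3 by linarith
    moreover have "pos ?L3 d' = pos L d \<longrightarrow> d' = d"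
    proof
      assume "pos ?L3 d' = pos L d"
      then have "pos ?L2 d' = pos ?L2 d" using A B C1 C2' C3 by linarith
      moreover have "d' \<in> set ?L2" using d'3 Q by simp
      ultimately show "d' = d" using pos_inj[OF d2] d2in by blast
    qed
    ultimately show ?thesis using d' by blast
  qed
qed

lemma cell_ne:
  assumes e: "(v,w,v') \<in> mrel \<tau>" and h: "stk B v a \<noteq> {} \<or> (a = bot \<and> v \<in> bset B)"
  shows "stk (Bs ! (k+3)) v' (nxt \<alpha> a w) \<noteq> {}"
proof -
  have "stk (Bs ! (k+1)) v a \<noteq> {}"
  proof (cases "stk B v a \<noteq> {}")
    case True
    then obtain S where "S \<in> stk B v a" by blast
    have "\<exists>T\<in>stk (Bs ! k) v a. T \<subseteq> S \<and> {} \<subseteq> T \<and> (\<forall>d. d \<in> S - {} \<and> (\<forall>z\<in>S-{}. pos L d \<le> pos L z) \<longrightarrow> d \<in> T)"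
      by (rule rchain[of S v a "{}"]) (use \<open>S \<in> stk B v a\<close> in auto)
    then obtain T where "T \<in> stk (Bs ! k) v a" by blast
    then show ?thesis using gfacts(4) pop_mono by (metis empty_iff subsetD)
  next
    case False
    then have "a = bot" "v \<in> bset (Bs ! k)" using h bk(2) by auto
    then show ?thesis using gfacts(4) pop_ne by metis
  qed
  then obtain T where T1: "T \<in> stk (Bs ! (k+1)) v a" by blast
  obtain C where C: "C \<in> stk (Bs ! (k+2)) v' (nxt \<alpha> a w)" using Tk_facts[OF T1 e] by blast
  then have "stk (Bs ! (k+2)) v' (nxt \<alpha> a w) \<noteq> {}" by blast
  then show ?thesis using gfacts(6) thin_stk[OF bk2] by simp
qed

end



locale gr =
  fixes \<alpha> :: "'a::{finite,bounded_semilattice_sup_bot}" and \<tau> :: "nat \<Rightarrow> ('x,'a) mor"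
    and b :: "nat \<Rightarrow> ('x,'a) board" and p :: "nat \<Rightarrow> nat"
  assumes ab: "\<alpha> \<noteq> bot" and mt: "\<forall>n. is_morphism (\<tau> n)" and dp: "describes_path \<tau>"
    and boards: "\<forall>i. is_board (b i)" and b0: "b 0 = empty_board (mdom (\<tau> 0))" and p0: "p 0 = 0"
    and gtn: "\<forall>n. greedy_trans \<alpha> (\<tau> n) (b (p n)) (map b [p n..<Suc (p (Suc n))])"
begin

definition "Bs n = map b [p n..<Suc (p (Suc n))]"
definition "kk n = length (filter (\<lambda>\<gamma>. covered \<gamma> (b (p n))) (ctrl (b (p n))))"

lemma gt_n: "gt \<alpha> (\<tau> n) (b (p n)) (Bs n)"
proof (induction n)
  case 0
  have "bset (b (p 0)) = mdom (\<tau> 0)" using b0 p0 by (simp add: empty_board_def)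
  then show ?case unfolding gt_def Bs_def using ab boards mt gtn by blast
next
  case (Suc n)
  interpret g: gt \<alpha> "\<tau> n" "b (p n)" "Bs n" by (rule Suc)
  have l: "length (Bs n) = Suc (p (Suc n)) - p n" by (simp only: Bs_def length_map length_upt)
  then have eq: "p (Suc n) = p n + g.k + 3" using g.gfacts(1) by arith
  have "Bs n ! (g.k + 3) = b (p (Suc n))" unfolding Bs_def using eq by (simp add: nth_map_upt add.assoc)
  then have "bset (b (p (Suc n))) = mcod (\<tau> n)" using g.bset3 by simp
  then have "bset (b (p (Suc n))) = mdom (\<tau> (Suc n))" using dp by (simp add: describes_path_def)
  then show ?case unfolding gt_def Bs_def using ab boards mt gtn by blast
qed

lemma k_eq: "gt.k (b (p n)) = kk n"
  unfolding gt.k_def[OF gt_n] gt.cs_def[OF gt_n] kk_def by simp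

lemma p_suc: "p (Suc n) = p n + kk n + 3"
proof -
  interpret g: gt \<alpha> "\<tau> n" "b (p n)" "Bs n" by (rule gt_n)
  have "length (Bs n) = Suc (p (Suc n)) - p n" by (simp only: Bs_def length_map length_upt)
  then show ?thesis using g.gfacts(1) k_eq[of n] by arith
qed

lemma p_mono: "strict_mono p" unfolding strict_mono_Suc_iff using p_suc by simp

lemma Bs_nth: "j \<le> kk n + 3 \<Longrightarrow> Bs n ! j = b (p n + j)"
  unfolding Bs_def using p_suc[of n] by (simp add: nth_map_upt)

lemma bset_n: "bset (b (p n)) = mdom (\<tau> n)" using gt_n[of n] by (simp add: gt_def)

lemma thin_n: "S \<in> stk (b (p (Suc n))) x a \<Longrightarrow> S' \<in> stk (b (p (Suc n))) x a \<Longrightarrow> S = S'"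
proof -
  interpret g: gt \<alpha> "\<tau> n" "b (p n)" "Bs n" by (rule gt_n)
  have "b (p (Suc n)) = thin_fun (Bs n ! (g.k + 2))"
    using g.gfacts(6) Bs_nth[of "kk n + 3" n] p_suc k_eq by (simp add: add.assoc)
  then show "S \<in> stk (b (p (Suc n))) x a \<Longrightarrow> S' \<in> stk (b (p (Suc n))) x a \<Longrightarrow> S = S'"
    using thin_single[OF g.bk2] by metis
qed

lemma covered_n: "covered \<gamma> (b (p n)) \<Longrightarrow> \<exists>i. p n \<le> i \<and> i < p (Suc n) \<and> reset_step \<gamma> (b i) (b (Suc i))"
proof -
  interpret g: gt \<alpha> "\<tau> n" "b (p n)" "Bs n" by (rule gt_n)
  assume "covered \<gamma> (b (p n))"
  then obtain j where j: "j < g.k" "reset_step \<gamma> (Bs n ! j) (Bs n ! Suc j)" using g.covered_reset_ex by blast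
  then have "Bs n ! j = b (p n + j)" "Bs n ! Suc j = b (Suc (p n + j))" using Bs_nth k_eq by auto
  then show ?thesis using j p_suc k_eq by (intro exI[of _ "p n + j"]) auto
qed

lemma run_step:
  assumes S: "S \<in> stk (b (p n)) v a" and e: "(v,w,v') \<in> mrel (\<tau> n)" and G: "G \<subseteq> S"
    and nc: "\<forall>g\<in>G. \<not> covered g (b (p n))"
    and below: "\<forall>g\<in>G. \<forall>z\<in>S-G. pos (ctrl (b (p n))) g < pos (ctrl (b (p n))) z"
  shows "\<forall>i. p n \<le> i \<and> i < p (Suc n) \<longrightarrow> G \<subseteq> set (ctrl (b i)) \<and> (\<forall>d. ismin (ctrl (b (p n))) (S-G) d \<longrightarrow> d \<in> set (ctrl (b i)))"
    and "S' \<in> stk (b (p (Suc n))) v' (nxt \<alpha> a w) \<Longrightarrow> G \<subseteq> S' \<Longrightarrow> S - G \<noteq> {} \<or> sup a w = \<alpha> \<Longrightarrow> S' - G \<noteq> {}"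
    and "S' \<in> stk (b (p (Suc n))) v' (nxt \<alpha> a w) \<Longrightarrow> G \<subseteq> S' \<Longrightarrow> ismin (ctrl (b (p n))) (S-G) d \<Longrightarrow>
          \<exists>d'. ismin (ctrl (b (p (Suc n)))) (S'-G) d' \<and> pos (ctrl (b (p (Suc n)))) d' \<le> pos (ctrl (b (p n))) d \<and>
              (pos (ctrl (b (p (Suc n)))) d' = pos (ctrl (b (p n))) d \<longrightarrow> d' = d)"
proof -
  interpret g: gt \<alpha> "\<tau> n" "b (p n)" "Bs n" by (rule gt_n)
  have e3: "Bs n ! (g.k + 3) = b (p (Suc n))" using Bs_nth[of "kk n + 3" n] p_suc k_eq by (simp add: add.assoc)
  note ts = g.trace_step[OF S e G nc below]
  show "\<forall>i. p n \<le> i \<and> i < p (Suc n) \<longrightarrow> G \<subseteq> set (ctrl (b i)) \<and> (\<forall>d. ismin (ctrl (b (p n))) (S-G) d \<longrightarrow> d \<in> set (ctrl (b i)))"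
  proof (intro allI impI)
    fix i assume i: "p n \<le> i \<and> i < p (Suc n)"
    then have "i - p n \<le> kk n + 2" using p_suc[of n] by arith
    then have "i - p n \<le> g.k + 2" using k_eq[of n] by simp
    moreover have "Bs n ! (i - p n) = b i" using Bs_nth[of "i - p n" n] i \<open>i - p n \<le> kk n + 2\<close> by simp
    ultimately show "G \<subseteq> set (ctrl (b i)) \<and> (\<forall>d. ismin (ctrl (b (p n))) (S-G) d \<longrightarrow> d \<in> set (ctrl (b i)))"
      using ts(1) by metis
  qed
  show "S' \<in> stk (b (p (Suc n))) v' (nxt \<alpha> a w) \<Longrightarrow> G \<subseteq> S' \<Longrightarrow> S - G \<noteq> {} \<or> sup a w = \<alpha> \<Longrightarrow> S' - G \<noteq> {}"
    using ts(2) e3 by metis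
  show "S' \<in> stk (b (p (Suc n))) v' (nxt \<alpha> a w) \<Longrightarrow> G \<subseteq> S' \<Longrightarrow> ismin (ctrl (b (p n))) (S-G) d \<Longrightarrow>
          \<exists>d'. ismin (ctrl (b (p (Suc n)))) (S'-G) d' \<and> pos (ctrl (b (p (Suc n)))) d' \<le> pos (ctrl (b (p n))) d \<and>
              (pos (ctrl (b (p (Suc n)))) d' = pos (ctrl (b (p n))) d \<longrightarrow> d' = d)"
    using ts(3) e3 by metis
qed

lemma run_cell:
  assumes e: "(v,w,v') \<in> mrel (\<tau> n)" and h: "stk (b (p n)) v a \<noteq> {} \<or> (a = bot \<and> v \<in> bset (b (p n)))"
  shows "stk (b (p (Suc n))) v' (nxt \<alpha> a w) \<noteq> {}"
proof -
  interpret g: gt \<alpha> "\<tau> n" "b (p n)" "Bs n" by (rule gt_n)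
  have e3: "Bs n ! (g.k + 3) = b (p (Suc n))" using Bs_nth[of "kk n + 3" n] p_suc k_eq by (simp add: add.assoc)
  show ?thesis using g.cell_ne[OF e h] e3 by simp
qed

end



fun accw :: "(nat \<Rightarrow> 'a::semilattice_sup) \<Rightarrow> nat \<Rightarrow> 'a" where
  "accw g 0 = g 0"
| "accw g (Suc j) = sup (accw g j) (g (Suc j))"

lemma accw_cong: "(\<forall>j\<le>m. g j = g' j) \<Longrightarrow> accw g m = accw g' m"
  by (induction m) auto

lemma accw_le: "j \<le> m \<Longrightarrow> g j \<le> accw g m"
proof (induction m)
  case 0 then show ?case by simp
next
  case (Suc m)
  then show ?case by (cases "j = Suc m") (auto intro: le_supI1)
qed

lemma seg_path: "(x,c,z) \<in> seg \<tau> n m \<Longrightarrow> \<exists>f g. f 0 = x \<and> f (Suc m) = z \<and>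
   (\<forall>j\<le>m. (f j, g j, f (Suc j)) \<in> mrel (\<tau> (n+j))) \<and> accw g m = c"
proof (induction m arbitrary: z c)
  case 0
  then show ?case by (intro exI[of _ "\<lambda>j. if j = 0 then x else z"] exI[of _ "\<lambda>_. c"]) auto
next
  case (Suc m)
  then obtain y a b' where y: "(x,a,y) \<in> seg \<tau> n m" "(y,b',z) \<in> mrel (\<tau> (n + Suc m))" "sup a b' = c"
    by (auto simp: rcomp_def)
  then obtain f g where fg: "f 0 = x" "f (Suc m) = y" "\<forall>j\<le>m. (f j, g j, f (Suc j)) \<in> mrel (\<tau> (n+j))"
    "accw g m = a" using Suc.IH by blast
  define f' where "f' = f(Suc (Suc m) := z)"
  define g' where "g' = g(Suc m := b')"
  have "accw g' m = a" using fg(4) accw_cong[of m g' g] by (simp add: g'_def)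
  then have "accw g' (Suc m) = c" using y(3) by (simp add: g'_def)
  moreover have "\<forall>j\<le>Suc m. (f' j, g' j, f' (Suc j)) \<in> mrel (\<tau> (n+j))"
  proof (intro allI impI)
    fix j assume j: "j \<le> Suc m"
    show "(f' j, g' j, f' (Suc j)) \<in> mrel (\<tau> (n+j))"
    proof (cases "j = Suc m")
      case True then show ?thesis using y(2) fg(2) by (simp add: f'_def g'_def)
    next
      case False then show ?thesis using fg(3) j by (simp add: f'_def g'_def)
    qed
  qed
  ultimately show ?case using fg(1) by (intro exI[of _ f'] exI[of _ g']) (simp add: f'_def)
qed

fun acc :: "'a::bounded_semilattice_sup_bot \<Rightarrow> (nat \<Rightarrow> 'a) \<Rightarrow> nat \<Rightarrow> 'a" where
  "acc \<alpha> W 0 = bot"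
| "acc \<alpha> W (Suc n) = nxt \<alpha> (acc \<alpha> W n) (W n)"

lemma acc_le: "(\<forall>n. W n \<le> \<alpha>) \<Longrightarrow> acc \<alpha> W n \<le> \<alpha>"
  by (induction n) (auto simp: nxt_def)

lemma sm_ge: "strict_mono (k::nat\<Rightarrow>nat) \<Longrightarrow> k i \<ge> k 0 + i"
proof (induction i)
  case 0 then show ?case by simp
next
  case (Suc i)
  then have "k i < k (Suc i)" by (simp add: strict_mono_def)
  then show ?case using Suc by simp
qed

definition sgi :: "(nat \<Rightarrow> nat) \<Rightarrow> nat \<Rightarrow> nat" where "sgi k u = (LEAST i. u < k (Suc i))"

lemma sgi_prop: assumes sm: "strict_mono k" and u: "k 0 \<le> u"
  shows "k (sgi k u) \<le> u \<and> u < k (Suc (sgi k u))"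
proof -
  have ex: "u < k (Suc u)" using sm_ge[OF sm, of "Suc u"] by simp
  have l: "u < k (Suc (sgi k u))" unfolding sgi_def by (rule LeastI[of _ u]) (rule ex)
  have "k (sgi k u) \<le> u"
  proof (cases "sgi k u")
    case 0 then show ?thesis using u by simp
  next
    case (Suc i)
    then have "i < sgi k u" by simp
    then have "\<not> u < k (Suc i)" unfolding sgi_def by (rule not_less_Least)
    then show ?thesis using Suc by simp
  qed
  then show ?thesis using l by simp
qed

lemma sgi_eq: assumes sm: "strict_mono k" and u: "k i \<le> u" "u < k (Suc i)" shows "sgi k u = i"
  unfolding sgi_def
proof (rule Least_equality)
  show "u < k (Suc i)" using u by simp
  fix i' assume "u < k (Suc i')"
  show "i \<le> i'"
  proof (rule ccontr)
    assume "\<not> i \<le> i'"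
    then have "Suc i' \<le> i" by simp
    then have "k (Suc i') \<le> k i" using sm by (simp add: strict_mono_less_eq)
    then show False using u \<open>u < k (Suc i')\<close> by simp
  qed
qed

lemma trace_path:
  assumes tc: "trace_condition \<alpha> \<tau>"
  shows "\<exists>T0 V W. V 0 \<in> mdom (\<tau> T0) \<and> (\<forall>n. (V n, W n, V (Suc n)) \<in> mrel (\<tau> (T0+n))) \<and>
            (\<forall>n. W n \<le> \<alpha>) \<and> (\<forall>N. \<exists>n\<ge>N. sup (acc \<alpha> W n) (W n) = \<alpha>)"
proof -
  obtain k s where sm: "strict_mono k" and s0: "\<forall>i. s i \<in> mdom (\<tau> (k i))"
    and st: "\<forall>i. (s i, \<alpha>, s (Suc i)) \<in> Ppath \<tau> (k i) (k (Suc i))"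
    using tc unfolding trace_condition_def by blast
  define m where "m i = k (Suc i) - k i - 1" for i
  have km: "k (Suc i) = k i + m i + 1" for i
  proof -
    have "k i < k (Suc i)" using sm by (simp add: strict_mono_def)
    then show ?thesis unfolding m_def by arith
  qed
  have "\<forall>i. \<exists>fg. fst fg 0 = s i \<and> fst fg (Suc (m i)) = s (Suc i) \<and>
      (\<forall>j\<le>m i. (fst fg j, snd fg j, fst fg (Suc j)) \<in> mrel (\<tau> (k i + j))) \<and> accw (snd fg) (m i) = \<alpha>"
  proof
    fix i
    have "(s i, \<alpha>, s (Suc i)) \<in> seg \<tau> (k i) (m i)" using st unfolding Ppath_def m_def by simp
    from seg_path[OF this] obtain f g where "f 0 = s i" "f (Suc (m i)) = s (Suc i)"
      "\<forall>j\<le>m i. (f j, g j, f (Suc j)) \<in> mrel (\<tau> (k i + j))" "accw g (m i) = \<alpha>" by blast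
    then show "\<exists>fg. fst fg 0 = s i \<and> fst fg (Suc (m i)) = s (Suc i) \<and>
      (\<forall>j\<le>m i. (fst fg j, snd fg j, fst fg (Suc j)) \<in> mrel (\<tau> (k i + j))) \<and> accw (snd fg) (m i) = \<alpha>"
      by (intro exI[of _ "(f,g)"]) simp
  qed
  then obtain FG where FG: "\<forall>i. fst (FG i) 0 = s i \<and> fst (FG i) (Suc (m i)) = s (Suc i) \<and>
      (\<forall>j\<le>m i. (fst (FG i) j, snd (FG i) j, fst (FG i) (Suc j)) \<in> mrel (\<tau> (k i + j))) \<and> accw (snd (FG i)) (m i) = \<alpha>"
    by metis
  define F where "F i = fst (FG i)" for i
  define Gw where "Gw i = snd (FG i)" for i
  have F0: "F i 0 = s i" and Fm: "F i (Suc (m i)) = s (Suc i)"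
    and Fe: "\<And>j. j \<le> m i \<Longrightarrow> (F i j, Gw i j, F i (Suc j)) \<in> mrel (\<tau> (k i + j))"
    and Fa: "accw (Gw i) (m i) = \<alpha>" for i using FG unfolding F_def Gw_def by auto
  define T0 where "T0 = k 0"
  define V where "V n = F (sgi k (T0+n)) (T0 + n - k (sgi k (T0+n)))" for n
  define W where "W n = Gw (sgi k (T0+n)) (T0 + n - k (sgi k (T0+n)))" for n
  have VW: "V n = F i j \<and> W n = Gw i j" if "T0 + n = k i + j" "j \<le> m i" for n i j
  proof -
    have "sgi k (T0+n) = i" using sgi_eq[OF sm, of i "T0+n"] that km by simp
    then show ?thesis unfolding V_def W_def using that by simp
  qed
  have loc: "\<exists>i j. T0 + n = k i + j \<and> j \<le> m i" for n
  proof -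
    have "k 0 \<le> T0 + n" unfolding T0_def by simp
    from sgi_prop[OF sm this] show ?thesis using km
      by (intro exI[of _ "sgi k (T0+n)"] exI[of _ "T0 + n - k (sgi k (T0+n))"]) fastforce
  qed
  have V0: "V 0 \<in> mdom (\<tau> T0)" using VW[of 0 0 0] F0 s0 unfolding T0_def by simp
  have edge: "(V n, W n, V (Suc n)) \<in> mrel (\<tau> (T0+n))" for n
  proof -
    obtain i j where ij: "T0 + n = k i + j" "j \<le> m i" using loc by blast
    have e: "(F i j, Gw i j, F i (Suc j)) \<in> mrel (\<tau> (T0+n))" using Fe[OF ij(2)] ij(1) by simp
    have "V (Suc n) = F i (Suc j)"
    proof (cases "j < m i")
      case True then show ?thesis using VW[of "Suc n" i "Suc j"] ij by simp
    next
      case False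
      then have "j = m i" using ij by simp
      then have "T0 + Suc n = k (Suc i) + 0" using ij km by simp
      then have "V (Suc n) = F (Suc i) 0" using VW[of "Suc n" "Suc i" 0] by simp
      then show ?thesis using F0 Fm \<open>j = m i\<close> by simp
    qed
    then show ?thesis using e VW[OF ij] by simp
  qed
  have Wle: "W n \<le> \<alpha>" for n
  proof -
    obtain i j where ij: "T0 + n = k i + j" "j \<le> m i" using loc by blast
    then show ?thesis using VW[OF ij] accw_le[OF ij(2), of "Gw i"] Fa by simp
  qed
  have accle: "acc \<alpha> W n \<le> \<alpha>" for n using acc_le Wle by blast
  have compl: "\<exists>n. k i - T0 \<le> n \<and> sup (acc \<alpha> W n) (W n) = \<alpha>" for i
  proof (rule ccontr)
    assume nc: "\<not> (\<exists>n. k i - T0 \<le> n \<and> sup (acc \<alpha> W n) (W n) = \<alpha>)"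
    define ni where "ni = k i - T0"
    have kiT: "k i = T0 + ni" using sm_ge[OF sm, of i] unfolding ni_def T0_def by simp
    have claim: "j \<le> m i \<Longrightarrow> sup (acc \<alpha> W (ni + j)) (W (ni + j)) = sup (acc \<alpha> W ni) (accw (Gw i) j)" for j
    proof (induction j)
      case 0
      then show ?case using VW[of ni i 0] kiT by simp
    next
      case (Suc j)
      have "sup (acc \<alpha> W (ni + j)) (W (ni + j)) \<noteq> \<alpha>" using nc unfolding ni_def by auto
      then have "acc \<alpha> W (ni + Suc j) = sup (acc \<alpha> W ni) (accw (Gw i) j)" using Suc by (simp add: nxt_def)
      moreover have "W (ni + Suc j) = Gw i (Suc j)" using VW[of "ni + Suc j" i "Suc j"] kiT Suc.prems by simp
      ultimately show ?case by (simp add: sup_assoc)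
    qed
    have "sup (acc \<alpha> W (ni + m i)) (W (ni + m i)) = \<alpha>"
      using claim[of "m i"] Fa accle[of ni] by (simp add: sup_absorb2)
    then show False using nc unfolding ni_def by auto
  qed
  have "\<forall>N. \<exists>n\<ge>N. sup (acc \<alpha> W n) (W n) = \<alpha>"
  proof
    fix N
    have "k N - T0 \<ge> N" using sm_ge[OF sm, of N] unfolding T0_def by simp
    then show "\<exists>n\<ge>N. sup (acc \<alpha> W n) (W n) = \<alpha>" using compl[of N] by (meson le_trans)
  qed
  then show ?thesis using V0 edge Wle by blast
qed




lemma ismin_unique: "distinct L \<Longrightarrow> X \<subseteq> set L \<Longrightarrow> ismin L X d \<Longrightarrow> ismin L X d' \<Longrightarrow> d = d'"
  unfolding ismin_def by (meson antisym pos_inj subsetD)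

locale gra = gr \<alpha> \<tau> b p for \<alpha> :: "'a::{finite,bounded_semilattice_sup_bot}" and \<tau> :: "nat \<Rightarrow> ('x,'a) mor"
    and b and p +
  fixes M :: "('x,'a) mor set" and T0 :: nat and V :: "nat \<Rightarrow> 'x" and W :: "nat \<Rightarrow> 'a"
  assumes fM: "finite M" and tM: "\<forall>i. \<tau> i \<in> M"
    and V0: "V 0 \<in> mdom (\<tau> T0)" and edge: "\<forall>n. (V n, W n, V (Suc n)) \<in> mrel (\<tau> (T0+n))"
    and compl: "\<forall>N. \<exists>n\<ge>N. sup (acc \<alpha> W n) (W n) = \<alpha>"
    and NA: "\<forall>\<gamma> N. (\<forall>i\<ge>N. \<gamma> \<in> set (ctrl (b i))) \<longrightarrow> finite {i. reset_step \<gamma> (b i) (b (Suc i))}"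
begin

abbreviation "Bt n \<equiv> b (p (T0 + n))"
abbreviation "Lt n \<equiv> ctrl (Bt n)"
abbreviation "aa n \<equiv> acc \<alpha> W n"

lemma cellne: "stk (Bt (Suc n)) (V (Suc n)) (aa (Suc n)) \<noteq> {}"
proof (induction n)
  case 0
  have "V 0 \<in> bset (b (p (T0 + 0)))" using V0 bset_n by simp
  moreover have "(V 0, W 0, V (Suc 0)) \<in> mrel (\<tau> T0)" using edge[rule_format, of 0] by simp
  ultimately show ?case using run_cell[of "V 0" "W 0" "V (Suc 0)" "T0 + 0" bot] by simp
next
  case (Suc n)
  moreover have "(V (Suc n), W (Suc n), V (Suc (Suc n))) \<in> mrel (\<tau> (T0 + Suc n))" using edge by blast
  ultimately show ?case using run_cell[of "V (Suc n)" "W (Suc n)" "V (Suc (Suc n))" "T0 + Suc n" "aa (Suc n)"] by simp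
qed

definition "m n = (THE S. S \<in> stk (Bt n) (V n) (aa n))"

lemma m_in: "n \<ge> 1 \<Longrightarrow> m n \<in> stk (Bt n) (V n) (aa n)"
proof -
  assume "n \<ge> 1"
  then obtain n' where n': "n = Suc n'" by (cases n) auto
  obtain S where S: "S \<in> stk (Bt n) (V n) (aa n)" using cellne n' by blast
  have e: "Bt n = b (p (Suc (T0 + n')))" using n' by simp
  have S2: "S \<in> stk (b (p (Suc (T0 + n')))) (V n) (aa n)" using S e by simp
  have u: "S' = S" if "S' \<in> stk (Bt n) (V n) (aa n)" for S'
  proof -
    have "S' \<in> stk (b (p (Suc (T0 + n')))) (V n) (aa n)" using that e by simp
    then show ?thesis using thin_n[OF _ S2] by blast
  qed
  have "m n = S" unfolding m_def by (rule the_equality) (rule S, rule u)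
  then show ?thesis using S by simp
qed

lemma m_next: "n \<ge> 1 \<Longrightarrow> m (Suc n) \<in> stk (b (p (Suc (T0 + n)))) (V (Suc n)) (nxt \<alpha> (aa n) (W n))"
  using m_in[of "Suc n"] by simp

lemma m_ctrl: "n \<ge> 1 \<Longrightarrow> m n \<subseteq> set (Lt n)"
  using board_sub[OF boards[rule_format] m_in] by simp

lemma dLt: "distinct (Lt n)" using boards by (simp add: is_board_def)

definition "Inv G N \<longleftrightarrow> N \<ge> 1 \<and> (\<forall>n\<ge>N. G \<subseteq> m n \<and> (\<forall>g\<in>G. \<forall>z\<in>m n - G. pos (Lt n) g < pos (Lt n) z)
     \<and> (\<forall>g\<in>G. \<not> covered g (Bt n)))"

lemma step_ne:
  assumes I: "Inv G N" and n: "n \<ge> N" and ne: "m n - G \<noteq> {} \<or> sup (aa n) (W n) = \<alpha>"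
  shows "m (Suc n) - G \<noteq> {}"
proof -
  have n1: "n \<ge> 1" using I n by (simp add: Inv_def)
  have h: "G \<subseteq> m n" "\<forall>g\<in>G. \<forall>z\<in>m n - G. pos (Lt n) g < pos (Lt n) z" "\<forall>g\<in>G. \<not> covered g (Bt n)"
    "G \<subseteq> m (Suc n)" using I n unfolding Inv_def by auto
  show ?thesis
    using run_step(2)[OF m_in[OF n1] _ h(1) h(3) h(2) m_next[OF n1] h(4) ne] edge by simp
qed

lemma step_min:
  assumes I: "Inv G N" and n: "n \<ge> N" and dm: "ismin (Lt n) (m n - G) d"
  shows "\<exists>d'. ismin (Lt (Suc n)) (m (Suc n) - G) d' \<and> pos (Lt (Suc n)) d' \<le> pos (Lt n) d \<and>
              (pos (Lt (Suc n)) d' = pos (Lt n) d \<longrightarrow> d' = d)"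
proof -
  have n1: "n \<ge> 1" using I n by (simp add: Inv_def)
  have h: "G \<subseteq> m n" "\<forall>g\<in>G. \<forall>z\<in>m n - G. pos (Lt n) g < pos (Lt n) z" "\<forall>g\<in>G. \<not> covered g (Bt n)"
    "G \<subseteq> m (Suc n)" using I n unfolding Inv_def by auto
  show ?thesis
    using run_step(3)[OF m_in[OF n1] _ h(1) h(3) h(2) m_next[OF n1] h(4) dm] edge by simp
qed

lemma step_perm:
  assumes I: "Inv G N" and n: "n \<ge> N" and dm: "ismin (Lt n) (m n - G) d"
    and i: "p (T0 + n) \<le> i" "i < p (Suc (T0 + n))"
  shows "G \<subseteq> set (ctrl (b i)) \<and> d \<in> set (ctrl (b i))"
proof -
  have n1: "n \<ge> 1" using I n by (simp add: Inv_def)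
  have h: "G \<subseteq> m n" "\<forall>g\<in>G. \<forall>z\<in>m n - G. pos (Lt n) g < pos (Lt n) z" "\<forall>g\<in>G. \<not> covered g (Bt n)"
    using I n unfolding Inv_def by auto
  show ?thesis
    using run_step(1)[OF m_in[OF n1] _ h(1) h(3) h(2)] edge i dm by blast
qed

end



context gra
begin

lemma p_ge: "p x \<ge> x" using sm_ge[OF p_mono, of x] p0 by simp

lemma inv_step:
  assumes I: "Inv G N"
  shows "\<exists>d N'. d \<notin> G \<and> Inv (insert d G) N'"
proof -
  have N1: "N \<ge> 1" using I by (simp add: Inv_def)
  obtain n1 where n1: "n1 \<ge> N" "sup (aa n1) (W n1) = \<alpha>" using compl by blast
  have ne: "m n - G \<noteq> {}" if "n \<ge> Suc n1" for n
    using that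
  proof (induction n rule: dec_induct)
    case base then show ?case using step_ne[OF I n1(1)] n1(2) by blast
  next
    case (step n) then show ?case using step_ne[OF I, of n] n1(1) by simp
  qed
  define \<delta> where "\<delta> n = (SOME d. ismin (Lt n) (m n - G) d)" for n
  have dism: "ismin (Lt n) (m n - G) (\<delta> n)" if "n \<ge> Suc n1" for n
  proof -
    have "n \<ge> 1" using that by simp
    then have "finite (m n - G)" using m_ctrl finite_subset by blast
    then have "\<exists>d. ismin (Lt n) (m n - G) d" using ismin_ex ne[OF that] by blast
    then show ?thesis unfolding \<delta>_def by (rule someI_ex)
  qed
  define f where "f n = pos (Lt n) (\<delta> n)" for n
  have mon: "f (Suc n) \<le> f n \<and> (f (Suc n) = f n \<longrightarrow> \<delta> (Suc n) = \<delta> n)" if nn: "n \<ge> Suc n1" for n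
  proof -
    have nN: "n \<ge> N" using nn n1 by simp
    obtain d' where d': "ismin (Lt (Suc n)) (m (Suc n) - G) d'" "pos (Lt (Suc n)) d' \<le> pos (Lt n) (\<delta> n)"
      "pos (Lt (Suc n)) d' = pos (Lt n) (\<delta> n) \<longrightarrow> d' = \<delta> n"
      using step_min[OF I nN dism[OF nn]] by blast
    have "m (Suc n) - G \<subseteq> set (Lt (Suc n))" using m_ctrl[of "Suc n"] by auto
    then have "d' = \<delta> (Suc n)" using ismin_unique[OF dLt _ d'(1) dism] nn by simp
    then show ?thesis using d' unfolding f_def by simp
  qed
  obtain N1 where N1a: "N1 \<ge> Suc n1" and N1b: "\<forall>n. n \<ge> Suc n1 \<longrightarrow> f N1 \<le> f n"
    using ex_has_least_nat[of "\<lambda>n. n \<ge> Suc n1" "Suc n1" f] by auto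
  have fdec: "f n \<le> f N1" if "n \<ge> N1" for n
    using that
  proof (induction n rule: dec_induct)
    case base then show ?case by simp
  next
    case (step n) then show ?case using mon[of n] N1a by simp
  qed
  have dconst: "\<delta> n = \<delta> N1" if "n \<ge> N1" for n
    using that
  proof (induction n rule: dec_induct)
    case base then show ?case by simp
  next
    case (step n)
    have "f (Suc n) = f n" using fdec[of n] fdec[of "Suc n"] N1b step(1) N1a by (meson le_SucI le_antisym le_trans)
    then show ?case using mon[of n] step N1a by simp
  qed
  define d where "d = \<delta> N1"
  have dmin: "ismin (Lt n) (m n - G) d" if "n \<ge> N1" for n
    using dism[of n] dconst[OF that] that N1a unfolding d_def by simp
  have dG: "d \<notin> G" using dmin[of N1] unfolding ismin_def by blast
  have I1: "insert d G \<subseteq> m n \<and> (\<forall>g\<in>insert d G. \<forall>z\<in>m n - insert d G. pos (Lt n) g < pos (Lt n) z)"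
    if "n \<ge> N1" for n
  proof -
    have nN: "n \<ge> N" using that N1a n1 by simp
    have IG: "G \<subseteq> m n" "\<forall>g\<in>G. \<forall>z\<in>m n - G. pos (Lt n) g < pos (Lt n) z" using I nN unfolding Inv_def by auto
    have dm: "d \<in> m n - G" "\<forall>z\<in>m n - G. pos (Lt n) d \<le> pos (Lt n) z" using dmin[OF that] unfolding ismin_def by auto
    have n1': "n \<ge> 1" using nN N1 by simp
    have "\<forall>z\<in>m n - insert d G. pos (Lt n) d < pos (Lt n) z"
    proof
      fix z assume z: "z \<in> m n - insert d G"
      then have "pos (Lt n) d \<le> pos (Lt n) z" using dm by blast
      moreover have "pos (Lt n) d \<noteq> pos (Lt n) z"
        using pos_inj[OF dLt] m_ctrl[OF n1'] z dm(1) by blast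
      ultimately show "pos (Lt n) d < pos (Lt n) z" by simp
    qed
    then show ?thesis using IG dm by blast
  qed
  have perm: "d \<in> set (ctrl (b i))" if "i \<ge> p (T0 + N1)" for i
  proof -
    have "p 0 \<le> i" using p0 by simp
    from sgi_prop[OF p_mono this] have u: "p (sgi p i) \<le> i" "i < p (Suc (sgi p i))" by auto
    define u where "u = sgi p i"
    have "T0 + N1 \<le> u"
    proof (rule ccontr)
      assume "\<not> T0 + N1 \<le> u"
      then have "Suc u \<le> T0 + N1" by simp
      then have "p (Suc u) \<le> p (T0 + N1)" using p_mono by (simp add: strict_mono_less_eq)
      then show False using u that unfolding u_def by simp
    qed
    then have "u = T0 + (u - T0)" "u - T0 \<ge> N1" by arith+
    then obtain n where n: "u = T0 + n" "n \<ge> N1" by blast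
    have nN: "n \<ge> N" using n N1a n1 by simp
    show ?thesis using step_perm[OF I nN dmin[OF n(2)]] u n unfolding u_def by simp
  qed
  have "finite {i. reset_step d (b i) (b (Suc i))}" using NA perm by blast
  then obtain I0 where I0: "\<forall>i. reset_step d (b i) (b (Suc i)) \<longrightarrow> i < I0"
    using finite_nat_set_iff_bounded by auto
  define N2 where "N2 = max N1 I0"
  have unc: "\<not> covered d (Bt n)" if "n \<ge> N2" for n
  proof
    assume "covered d (Bt n)"
    then obtain i where i: "p (T0 + n) \<le> i" "reset_step d (b i) (b (Suc i))" using covered_n by blast
    have "i < I0" using I0 i by blast
    moreover have "p (T0 + n) \<ge> n" using p_ge[of "T0 + n"] by simp
    ultimately show False using i that unfolding N2_def by simp
  qed
  have "Inv (insert d G) N2"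
    unfolding Inv_def
  proof (intro conjI allI impI)
    show "N2 \<ge> 1" using N1a unfolding N2_def by simp
    fix n assume n: "n \<ge> N2"
    then have nN1: "n \<ge> N1" and nN: "n \<ge> N" unfolding N2_def using N1a n1 by auto
    show "insert d G \<subseteq> m n" using I1[OF nN1] by blast
    show "\<forall>g\<in>insert d G. \<forall>z\<in>m n - insert d G. pos (Lt n) g < pos (Lt n) z" using I1[OF nN1] by blast
    show "\<forall>g\<in>insert d G. \<not> covered g (Bt n)" using unc[OF n] I nN unfolding Inv_def by blast
  qed
  then show ?thesis using dG by blast
qed

lemma inv_card: "\<exists>G N. finite G \<and> card G = j \<and> Inv G N"
proof (induction j)
  case 0
  have "Inv {} 1" unfolding Inv_def by simp
  then show ?case by (intro exI[of _ "{}"] exI[of _ 1]) simp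
next
  case (Suc j)
  then obtain G N where G: "finite G" "card G = j" "Inv G N" by blast
  then obtain d N' where "d \<notin> G" "Inv (insert d G) N'" using inv_step by blast
  then show ?case using G by (intro exI[of _ "insert d G"] exI[of _ N']) simp
qed

lemma contradiction: False
proof -
  define K where "K = Max (card ` mdom ` M)"
  have cK: "card (mdom (\<tau> i)) \<le> K" for i unfolding K_def using fM tM by (simp add: Max_ge)
  obtain G N where G: "finite G" "card G = K * card (UNIV :: 'a set) + 1" "Inv G N" using inv_card by blast
  have N1: "N \<ge> 1" using G(3) by (simp add: Inv_def)
  then obtain N' where N': "N = Suc N'" by (cases N) auto
  have GN: "G \<subseteq> m N" "\<forall>g\<in>G. \<not> covered g (Bt N)" using G(3) unfolding Inv_def by auto
  have top: "\<exists>xa. \<exists>S. S \<in> stk (Bt N) (fst xa) (snd xa) \<and> is_top (Lt N) S g" if "g \<in> G" for g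
  proof -
    have "g \<in> set (Lt N)" using GN(1) m_ctrl[OF N1] that by blast
    then have "\<exists>x a S. S \<in> stk (Bt N) x a \<and> is_top (Lt N) S g" using GN(2) that unfolding covered_def by blast
    then show ?thesis by auto
  qed
  define \<phi> where "\<phi> g = (SOME xa. \<exists>S. S \<in> stk (Bt N) (fst xa) (snd xa) \<and> is_top (Lt N) S g)" for g
  have \<phi>p: "\<exists>S. S \<in> stk (Bt N) (fst (\<phi> g)) (snd (\<phi> g)) \<and> is_top (Lt N) S g" if "g \<in> G" for g
    unfolding \<phi>_def using someI_ex[OF top[OF that]] .
  have bN: "is_board (Bt N)" using boards by simp
  have img: "\<phi> ` G \<subseteq> bset (Bt N) \<times> UNIV"
  proof
    fix xa assume "xa \<in> \<phi> ` G"
    then obtain g where g: "g \<in> G" "xa = \<phi> g" by blast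
    then obtain S where "S \<in> stk (Bt N) (fst xa) (snd xa)" using \<phi>p by blast
    then have "fst xa \<in> bset (Bt N)" using bN unfolding is_board_def by blast
    then show "xa \<in> bset (Bt N) \<times> UNIV" by (cases xa) auto
  qed
  have inj: "inj_on \<phi> G"
  proof
    fix g g' assume g: "g \<in> G" "g' \<in> G" "\<phi> g = \<phi> g'"
    obtain S where S: "S \<in> stk (Bt N) (fst (\<phi> g)) (snd (\<phi> g))" "is_top (Lt N) S g" using \<phi>p g(1) by blast
    obtain S' where S': "S' \<in> stk (Bt N) (fst (\<phi> g)) (snd (\<phi> g))" "is_top (Lt N) S' g'" using \<phi>p g(2) g(3) by metis
    have "S \<in> stk (b (p (Suc (T0 + N')))) (fst (\<phi> g)) (snd (\<phi> g))"
      "S' \<in> stk (b (p (Suc (T0 + N')))) (fst (\<phi> g)) (snd (\<phi> g))" using S S' N' by simp_all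
    then have "S = S'" using thin_n by blast
    then have "chip_le (Lt N) g g'" "chip_le (Lt N) g' g" using S(2) S'(2) unfolding is_top_def by auto
    then show "g = g'" using dLt chip_le_pos pos_inj by (metis le_antisym)
  qed
  have "card G = card (\<phi> ` G)" using card_image[OF inj] by simp
  also have "\<dots> \<le> card (bset (Bt N) \<times> (UNIV :: 'a set))"
    using img by (rule card_mono[rotated]) (use bN in \<open>simp add: is_board_def\<close>)
  also have "\<dots> = card (bset (Bt N)) * card (UNIV :: 'a set)" by (simp add: card_cartesian_product)
  also have "\<dots> \<le> K * card (UNIV :: 'a set)" using cK bset_n by simp
  finally show False using G(2) by simp
qed

end

lemma accepting_thm:
  assumes g: "gr \<alpha> \<tau> b p" and fM: "finite M" and tM: "\<forall>i. \<tau> i \<in> M" and tc: "trace_condition \<alpha> \<tau>"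
  shows "accepting b"
proof (rule ccontr)
  assume na: "\<not> accepting b"
  then have NA: "\<forall>\<gamma> N. (\<forall>i\<ge>N. \<gamma> \<in> set (ctrl (b i))) \<longrightarrow> finite {i. reset_step \<gamma> (b i) (b (Suc i))}"
    unfolding accepting_def by blast
  obtain T0 V W where tp: "V 0 \<in> mdom (\<tau> T0)" "\<forall>n. (V n, W n, V (Suc n)) \<in> mrel (\<tau> (T0+n))"
    "\<forall>N. \<exists>n\<ge>N. sup (acc \<alpha> W n) (W n) = \<alpha>" using trace_path[OF tc] by blast
  interpret gra \<alpha> \<tau> b p M T0 V W
    using g fM tM tp NA by (simp add: gra_def gra_axioms_def)
  show False by (rule contradiction)
qed




fun rsf :: "nat list \<Rightarrow> ('x,'a) board \<Rightarrow> nat \<Rightarrow> ('x,'a) board" where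
  "rsf cs B 0 = B"
| "rsf cs B (Suc j) = reset_fun (cs ! j) (rsf cs B j)"

lemma rsf_facts: "is_board B \<Longrightarrow> is_board (rsf cs B j) \<and> bset (rsf cs B j) = bset B"
  by (induction j) (auto simp: reset_board reset_bset)

lemma gtrans_ex:
  assumes b: "is_board B" and bs: "bset B = mdom \<tau>" and mt: "is_morphism \<tau>"
  shows "\<exists>Bs. greedy_trans \<alpha> \<tau> B Bs"
proof -
  define cs where "cs = rev (filter (\<lambda>\<gamma>. covered \<gamma> B) (ctrl B))"
  define k where "k = length cs"
  define B1 where "B1 = pop_fun (rsf cs B k)"
  have b1: "is_board B1" "bset B1 = mdom \<tau>" using rsf_facts[OF b, of cs k] pop_board bs pop_bset
    unfolding B1_def by metis+
  obtain B2 where B2: "succ_step \<alpha> \<tau> B1 B2" using succ_ex[OF b1(1) mt b1(2)] by blast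
  define Bs where "Bs = map (rsf cs B) [0..<Suc k] @ [B1, B2, thin_fun B2]"
  have l: "length Bs = k + 4" unfolding Bs_def by simp
  have n1: "j \<le> k \<Longrightarrow> Bs ! j = rsf cs B j" for j unfolding Bs_def
    by (simp add: nth_append del: upt_Suc)
  have n2: "Bs ! (k+1) = B1" "Bs ! (k+2) = B2" "Bs ! (k+3) = thin_fun B2" unfolding Bs_def
    by (simp_all add: nth_append del: upt_Suc)
  show ?thesis unfolding greedy_trans_def Let_def
    apply (rule exI[of _ Bs])
    using l n1 n2 B2 unfolding cs_def[symmetric] k_def[symmetric] B1_def
    by (auto simp: Suc_le_eq)
qed

locale cons =
  fixes \<alpha> :: "'a::{finite,bounded_semilattice_sup_bot}" and \<tau> :: "nat \<Rightarrow> ('x,'a) mor"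
  assumes ab: "\<alpha> \<noteq> bot" and mt: "\<forall>n. is_morphism (\<tau> n)" and dp: "describes_path \<tau>"
begin

definition "gl B n = (SOME Bs. greedy_trans \<alpha> (\<tau> n) B Bs)"

primrec Bst :: "nat \<Rightarrow> ('x,'a) board" where
  "Bst 0 = empty_board (mdom (\<tau> 0))"
| "Bst (Suc n) = last (gl (Bst n) n)"

lemma gt_Bst: "gt \<alpha> (\<tau> n) (Bst n) (gl (Bst n) n)"
proof (induction n)
  case 0
  have bb: "is_board (Bst 0)" using mt by (simp add: is_board_def empty_board_def is_morphism_def)
  have bs: "bset (Bst 0) = mdom (\<tau> 0)" by (simp add: empty_board_def)
  have "greedy_trans \<alpha> (\<tau> 0) (Bst 0) (gl (Bst 0) 0)"
    unfolding gl_def by (rule someI_ex, rule gtrans_ex[OF bb bs]) (use mt in simp)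
  then show ?case unfolding gt_def using ab bb bs mt by simp
next
  case (Suc n)
  interpret g: gt \<alpha> "\<tau> n" "Bst n" "gl (Bst n) n" by (rule Suc)
  have "gl (Bst n) n \<noteq> []" using g.gfacts(1) by auto
  then have lst: "Bst (Suc n) = gl (Bst n) n ! (g.k + 3)" using g.gfacts(1) by (simp add: last_conv_nth add.commute)
  have bb: "is_board (Bst (Suc n))" using lst g.bk3 by simp
  have bs: "bset (Bst (Suc n)) = mdom (\<tau> (Suc n))" using lst g.bset3 dp by (simp add: describes_path_def)
  have "greedy_trans \<alpha> (\<tau> (Suc n)) (Bst (Suc n)) (gl (Bst (Suc n)) (Suc n))"
    unfolding gl_def by (rule someI_ex, rule gtrans_ex[OF bb bs]) (use mt in simp)
  then show ?case unfolding gt_def using ab bb bs mt by simp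
qed

definition "kn n = gt.k (Bst n)"

lemma len_gl: "length (gl (Bst n) n) = kn n + 4"
proof -
  interpret g: gt \<alpha> "\<tau> n" "Bst n" "gl (Bst n) n" by (rule gt_Bst)
  show ?thesis using g.gfacts(1) unfolding kn_def by simp
qed

primrec p :: "nat \<Rightarrow> nat" where
  "p 0 = 0"
| "p (Suc n) = p n + kn n + 3"

lemma p_sm: "strict_mono p" unfolding strict_mono_Suc_iff by simp

definition "b i = gl (Bst (sgi p i)) (sgi p i) ! (i - p (sgi p i))"

lemma b_val: assumes "p n \<le> i" "i \<le> p (Suc n)" shows "b i = gl (Bst n) n ! (i - p n)"
proof (cases "i < p (Suc n)")
  case True
  then have "sgi p i = n" using sgi_eq[OF p_sm] assms by blast
  then show ?thesis unfolding b_def by simp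
next
  case False
  then have i: "i = p (Suc n)" using assms by simp
  then have "sgi p i = Suc n" using sgi_eq[OF p_sm, of "Suc n" i] p_sm by (simp add: strict_mono_def)
  then have "b i = gl (Bst (Suc n)) (Suc n) ! 0" unfolding b_def using i by simp
  also have "\<dots> = Bst (Suc n)"
  proof -
    interpret g: gt \<alpha> "\<tau> (Suc n)" "Bst (Suc n)" "gl (Bst (Suc n)) (Suc n)" by (rule gt_Bst)
    show ?thesis using g.gfacts(2) .
  qed
  also have "\<dots> = gl (Bst n) n ! (kn n + 3)"
  proof -
    have "gl (Bst n) n \<noteq> []" using len_gl[of n] by auto
    then show ?thesis using len_gl[of n] by (simp add: last_conv_nth add.commute)
  qed
  finally show ?thesis using i by simp
qed

lemma map_b: "map b [p n..<Suc (p (Suc n))] = gl (Bst n) n"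
proof (rule nth_equalityI)
  show "length (map b [p n..<Suc (p (Suc n))]) = length (gl (Bst n) n)" using len_gl by simp
  fix j assume "j < length (map b [p n..<Suc (p (Suc n))])"
  then have j: "j \<le> kn n + 3" by simp
  then show "map b [p n..<Suc (p (Suc n))] ! j = gl (Bst n) n ! j"
    using b_val[of n "p n + j"] by (simp add: nth_map_upt del: upt_Suc)
qed

lemma b_pn: "b (p n) = Bst n" using b_val[of n "p n"] gt_Bst[of n] by (simp add: gt_def greedy_trans_def Let_def)

definition "io n = p (Suc n) - 2"

lemma b_board: "is_board (b i)"
proof -
  have "p 0 \<le> i" by simp
  from sgi_prop[OF p_sm this] have u: "p (sgi p i) \<le> i" "i < p (Suc (sgi p i))" by auto
  interpret g: gt \<alpha> "\<tau> (sgi p i)" "Bst (sgi p i)" "gl (Bst (sgi p i)) (sgi p i)" by (rule gt_Bst)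
  have "i - p (sgi p i) < length (gl (Bst (sgi p i)) (sgi p i))" using u len_gl by simp
  then show ?thesis using g.all_boards b_def by simp
qed

lemma greedy_run_ex: "greedy_run \<alpha> \<tau> b io"
proof -
  have gtn: "\<forall>n. greedy_trans \<alpha> (\<tau> n) (b (p n)) (map b [p n..<Suc (p (Suc n))])"
    using gt_Bst map_b b_pn by (simp add: gt_def)
  have smi: "strict_mono io" unfolding strict_mono_Suc_iff io_def by simp
  have succ: "succ_step \<alpha> (\<tau> n) (b (io n)) (b (Suc (io n)))" for n
  proof -
    interpret g: gt \<alpha> "\<tau> n" "Bst n" "gl (Bst n) n" by (rule gt_Bst)
    have kneq: "kn n = g.k" by (simp add: kn_def)
    have "b (io n) = gl (Bst n) n ! (g.k + 1)" "b (Suc (io n)) = gl (Bst n) n ! (g.k + 2)"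
      using b_val[of n "io n"] b_val[of n "Suc (io n)"] unfolding io_def by (simp_all add: numeral_eq_Suc kneq)
    then show ?thesis using g.gfacts(5) by simp
  qed
  have other: "weak_step (b i) (b (Suc i)) \<or> pop_step (b i) (b (Suc i)) \<or>
           (\<exists>\<gamma>\<in>set (ctrl (b i)). reset_step \<gamma> (b i) (b (Suc i)))" if i: "i \<notin> range io" for i
  proof -
    define n where "n = sgi p i"
    have "p 0 \<le> i" by simp
    from sgi_prop[OF p_sm this] have u: "p n \<le> i" "i < p (Suc n)" unfolding n_def by auto
    interpret g: gt \<alpha> "\<tau> n" "Bst n" "gl (Bst n) n" by (rule gt_Bst)
    define j where "j = i - p n"
    have kneq: "kn n = g.k" by (simp add: kn_def)
    have jk: "j \<le> g.k + 2" using u unfolding j_def by (simp add: kneq)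
    have bi: "b i = gl (Bst n) n ! j" "b (Suc i) = gl (Bst n) n ! Suc j"
      using b_val[of n i] b_val[of n "Suc i"] u unfolding j_def by (simp_all add: Suc_diff_le)
    have "j \<noteq> g.k + 1"
    proof
      assume "j = g.k + 1"
      then have "i = io n" using u unfolding j_def io_def by (simp add: kneq)
      then show False using i by simp
    qed
    then consider "j < g.k" | "j = g.k" | "j = g.k + 2" using jk by linarith
    then show ?thesis
    proof cases
      case 1 then show ?thesis using g.reset_steps bi by metis
    next
      case 2 then show ?thesis using g.bk1(2) bi by simp
    next
      case 3 then show ?thesis using g.bk3(2) bi by (simp add: numeral_eq_Suc)
    qed
  qed
  have "is_run \<alpha> \<tau> b io" unfolding is_run_def using smi b_board succ other by blast
  moreover have "b 0 = empty_board (mdom (\<tau> 0))" using b_pn[of 0] by simp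
  moreover have "\<forall>n. greedy_trans \<alpha> (\<tau> n) (b (p n)) (map b [p n..<Suc (p (Suc n))]) \<and> io n = p (Suc n) - 2"
    using gtn io_def by simp
  ultimately show ?thesis unfolding greedy_run_def by (metis p.simps(1))
qed

end


theorem mainTheorem2:
  fixes \<alpha> :: "'a::{finite, bounded_semilattice_sup_bot}"
    and M :: "('x,'a) mor set"
    and \<tau> :: "nat \<Rightarrow> ('x,'a) mor"
  assumes "\<alpha> \<noteq> bot"
    and "finite M"
    and "\<forall>R\<in>M. is_morphism R"
    and "\<forall>i. \<tau> i \<in> M"
    and "describes_path \<tau>"
    and "trace_condition \<alpha> \<tau>"
  shows "(\<exists>b \<iota>. greedy_run \<alpha> \<tau> b \<iota>) \<and> (\<forall>b \<iota>. greedy_run \<alpha> \<tau> b \<iota> \<longrightarrow> accepting b)"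
proof
  have mt: "\<forall>n. is_morphism (\<tau> n)" using assms(3,4) by blast
  interpret c: cons \<alpha> \<tau> using assms(1,5) mt by (simp add: cons_def)
  show "\<exists>b \<iota>. greedy_run \<alpha> \<tau> b \<iota>" using c.greedy_run_ex by blast
  show "\<forall>b \<iota>. greedy_run \<alpha> \<tau> b \<iota> \<longrightarrow> accepting b"
  proof (intro allI impI)
    fix b \<iota> assume gr: "greedy_run \<alpha> \<tau> b \<iota>"
    then obtain p where p: "p 0 = 0" "\<forall>n. greedy_trans \<alpha> (\<tau> n) (b (p n)) (map b [p n..<Suc (p (Suc n))])"
      unfolding greedy_run_def by blast
    have "\<forall>i. is_board (b i)" "b 0 = empty_board (mdom (\<tau> 0))"
      using gr unfolding greedy_run_def is_run_def by auto
    then have "gr \<alpha> \<tau> b p" unfolding gr_def using assms(1,5) mt p by blast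
    then show "accepting b" using accepting_thm assms(2,4,6) by blast
  qed
qed

end
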